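(* For every positive integer $n$, the function $\tilde B_n(h)$ is strictly increasing on $(0,d_n)$, i.e. $\tilde B_n'(h)>0$ for all $h\in(0,d_n)$, and $\lim_{h\to0}\tilde B_n(h)=0$.
   Context: Let $n$ be a positive integer, $d_n=\frac{n(n+1)^{2/n}}{2(n+2)}$, $W(u)=\frac{u^2}{2}-\frac{u^{n+2}}{(n+1)(n+2)}$ and $H(u,v)=\frac{v^2}{2}+W(u)$, the Hamiltonian of the system $u'=v$, $v'=-u+\frac{1}{n+1}u^{n+1}$. For $h\in(0,d_n)$ let $\Gamma_h$ be the periodic orbit of this system contained in $\{H=h\}$ surrounding the center $(0,0)$, oriented clockwise. Define $B_n(h)=\oint_{\Gamma_h}u^n v\,du$, $B_0(h)=\oint_{\Gamma_h}v\,du$ and $\tilde B_n(h)=B_n(h)/B_0(h)$. *)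

theory Defs
  imports "HOL-Analysis.Analysis"
begin

definition d_n :: "nat \<Rightarrow> real" where
  "d_n n = real n * (real n + 1) powr (2 / real n) / (2 * (real n + 2))"

definition W :: "nat \<Rightarrow> real \<Rightarrow> real" where
  "W n u = u^2 / 2 - u^(n+2) / ((real n + 1) * (real n + 2))"

definition H :: "nat \<Rightarrow> real \<Rightarrow> real \<Rightarrow> real" where
  "H n u v = v^2 / 2 + W n u"

definition field :: "nat \<Rightarrow> real \<times> real \<Rightarrow> real \<times> real" where
  "field n p = (snd p, - fst p + (fst p)^(n+1) / (real n + 1))"

text \<open>x is the trajectory of the system through the point (0, sqrt(2h)) of the oval
  in {H = h} (the top point on the v-axis), and T is its minimal positive period.
  Since u' = v > 0 there, the motion on the oval is clockwise.\<close>
definition is_orbit :: "nat \<Rightarrow> real \<Rightarrow> (real \<Rightarrow> real \<times> real) \<Rightarrow> real \<Rightarrow> bool" where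
  "is_orbit n h x T \<longleftrightarrow>
     (\<forall>t. (x has_vector_derivative field n (x t)) (at t)) \<and>
     x 0 = (0, sqrt (2 * h)) \<and> T > 0 \<and> x T = x 0 \<and> (\<forall>t\<in>{0<..<T}. x t \<noteq> x 0)"

definition orbit :: "nat \<Rightarrow> real \<Rightarrow> (real \<Rightarrow> real \<times> real) \<times> real" where
  "orbit n h = (SOME (x, T). is_orbit n h x T)"

text \<open>Line integral of the 1-form f(u,v) du along the clockwise oriented periodic orbit
  Gamma_h, parametrised by the trajectory over one period.\<close>
definition oint_du :: "nat \<Rightarrow> real \<Rightarrow> (real \<Rightarrow> real \<Rightarrow> real) \<Rightarrow> real" where
  "oint_du n h f = (case orbit n h of (x, T) \<Rightarrow>
      integral {0..T} (\<lambda>t. f (fst (x t)) (snd (x t)) * deriv (\<lambda>s. fst (x s)) t))"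

definition B :: "nat \<Rightarrow> real \<Rightarrow> real" where
  "B n h = oint_du n h (\<lambda>u v. u^n * v)"

definition B0 :: "nat \<Rightarrow> real \<Rightarrow> real" where
  "B0 n h = oint_du n h (\<lambda>u v. v)"

definition Btilde :: "nat \<Rightarrow> real \<Rightarrow> real" where
  "Btilde n h = B n h / B0 n h"

end

theory Submission
  imports Defs
begin


definition cc :: "nat \<Rightarrow> real" where "cc n = 2 / ((real n + 1) * (real n + 2))"
definition phi :: "nat \<Rightarrow> real \<Rightarrow> real" where "phi n u = u * sqrt (1 - cc n * u^n)"
definition dphi :: "nat \<Rightarrow> real \<Rightarrow> real" where
  "dphi n u = (1 - u^n / (real n + 1)) / sqrt (1 - cc n * u^n)"
definition UU :: "nat \<Rightarrow> real set" where "UU n = {u. u^n < real n + 1}"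
definition R0 :: "nat \<Rightarrow> real" where "R0 n = sqrt (2 * d_n n)"
definition Wd :: "nat \<Rightarrow> real \<Rightarrow> real" where "Wd n u = u - u^(n+1) / (real n + 1)"

lemma cc_pos: "cc n > 0" by (simp add: cc_def)

lemma cc_mult: "cc n * (real n + 1) = 2 / (real n + 2)"
proof -
  have a: "real n + 1 \<noteq> 0" "real n + 2 \<noteq> 0" by simp_all
  have "cc n * (real n + 1) = 2 * (real n + 1) / ((real n + 1) * (real n + 2))" by (simp add: cc_def)
  also have "\<dots> = 2 / (real n + 2)"
    using nonzero_mult_divide_mult_cancel_left[OF a(1), of 2 "real n + 2"] by (simp add: mult.commute)
  finally show ?thesis .
qed

lemma cc_mult2: "cc n * (real n + 2) = 2 / (real n + 1)"
proof -
  have a: "real n + 2 \<noteq> 0" by simp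
  have "cc n * (real n + 2) = 2 * (real n + 2) / ((real n + 2) * (real n + 1))" by (simp add: cc_def mult.commute)
  also have "\<dots> = 2 / (real n + 1)"
    using nonzero_mult_divide_mult_cancel_left[OF a, of 2 "real n + 1"] by (simp add: mult.commute)
  finally show ?thesis .
qed

lemma UU_cc: assumes "u \<in> UU n" shows "cc n * u^n < 1"
proof -
  have "cc n * u^n < cc n * (real n + 1)" using assms cc_pos by (simp add: UU_def)
  also have "\<dots> = 2 / (real n + 2)" by (rule cc_mult)
  also have "\<dots> \<le> 1" by simp
  finally show ?thesis .
qed

lemma phi_deriv:
  assumes n: "n \<ge> 1" and q: "cc n * u^n < 1"
  shows "(phi n has_real_derivative dphi n u) (at u)"
proof -
  define q where "q = 1 - cc n * u^n"
  have qp: "q > 0" using q by (simp add: q_def)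
  have e: "u * u^(n-1) = u^n" using n by (metis One_nat_def Suc_pred less_eq_Suc_le power_Suc)
  have d1: "((\<lambda>u. 1 - cc n * u^n) has_real_derivative - (cc n * (real n * u^(n-1)))) (at u)"
    by (auto intro!: derivative_eq_intros)
  have d2: "((\<lambda>u. sqrt (1 - cc n * u^n)) has_real_derivative
      (inverse (sqrt q) / 2 * (- (cc n * (real n * u^(n-1)))))) (at u)"
    using DERIV_chain2[OF DERIV_real_sqrt[OF qp[unfolded q_def]] d1] by (simp add: q_def)
  note d3 = DERIV_mult[OF DERIV_ident d2]
  have sp: "sqrt q > 0" using qp by simp
  have s: "sqrt q * sqrt q = q" using qp by simp
  have "1 * sqrt (1 - cc n * u^n) + inverse (sqrt q) / 2 * (- (cc n * (real n * u^(n-1)))) * u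
      = sqrt q - cc n * real n * (u * u^(n-1)) / (2 * sqrt q)"
    by (simp add: q_def field_simps)
  also have "\<dots> = (2 * q - cc n * real n * u^n) / (2 * sqrt q)"
    using sp s e by (simp add: field_simps)
  also have "2 * q - cc n * real n * u^n = 2 - (cc n * (real n + 2)) * u^n"
    by (simp add: q_def algebra_simps)
  also have "\<dots> = 2 * (1 - u^n / (real n + 1))"
    unfolding cc_mult2 by (simp add: field_simps)
  also have "2 * (1 - u^n / (real n + 1)) / (2 * sqrt q) = dphi n u"
    unfolding dphi_def q_def by (rule mult_divide_mult_cancel_left) simp
  finally show ?thesis using d3 unfolding phi_def[abs_def] by simp
qed

lemma dphi_pos: assumes "u \<in> UU n" shows "dphi n u > 0"
proof -
  have "1 - cc n * u^n > 0" using UU_cc[OF assms] by simp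
  moreover have "1 - u^n / (real n + 1) > 0" using assms by (simp add: UU_def field_simps)
  ultimately show ?thesis by (simp add: dphi_def)
qed

lemma phi_sq: assumes "cc n * u^n \<le> 1" shows "(phi n u)^2 = 2 * W n u"
  using assms by (simp add: phi_def W_def power_mult_distrib cc_def field_simps power_add)
    (simp add: algebra_simps power2_eq_square)

lemma phi_dphi: assumes "cc n * u^n < 1" shows "phi n u * dphi n u = Wd n u"
proof -
  have qp: "1 - cc n * u^n > 0" using assms by simp
  hence s: "sqrt (1 - cc n * u^n) > 0" by simp
  have "phi n u * dphi n u = u * (1 - u^n / (real n + 1))"
    unfolding phi_def dphi_def using s by simp
  thus ?thesis by (simp add: Wd_def algebra_simps)
qed

lemma UU_interval:
  assumes "a \<in> UU n" "b \<in> UU n" "a \<le> x" "x \<le> b"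
  shows "x \<in> UU n"
proof (cases "x \<ge> 0")
  case True
  hence "x^n \<le> b^n" using assms by (intro power_mono) auto
  thus ?thesis using assms by (simp add: UU_def)
next
  case False
  show ?thesis
  proof (cases "even n")
    case True
    have "x^n = (-x)^n" using True by simp
    also have "\<dots> \<le> (-a)^n" using False assms by (intro power_mono) auto
    also have "\<dots> = a^n" using True by simp
    finally show ?thesis using assms by (simp add: UU_def)
  next
    case odd: False
    have "x^n < 0" using odd False power_less_zero_eq[of x n] by simp
    moreover have "(0::real) \<le> real n + 1" by simp
    ultimately show ?thesis unfolding UU_def mem_Collect_eq by linarith
  qed
qed

lemma phi_strict_mono:
  assumes n: "n \<ge> 1" and "a \<in> UU n" "b \<in> UU n" "a < b"
  shows "phi n a < phi n b"
proof (rule DERIV_pos_imp_increasing[OF \<open>a < b\<close>])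
  fix x assume "a \<le> x" "x \<le> b"
  hence x: "x \<in> UU n" using assms UU_interval by blast
  show "\<exists>y. DERIV (phi n) x :> y \<and> 0 < y"
    using phi_deriv[OF n UU_cc[OF x]] dphi_pos[OF x] by blast
qed

lemma phi_mono_iff:
  assumes n: "n \<ge> 1" and "a \<in> UU n" "b \<in> UU n"
  shows "phi n a \<le> phi n b \<longleftrightarrow> a \<le> b"
proof
  assume "phi n a \<le> phi n b"
  thus "a \<le> b" using phi_strict_mono[OF n \<open>b \<in> UU n\<close> \<open>a \<in> UU n\<close>] by (meson linorder_not_le)
next
  assume "a \<le> b"
  thus "phi n a \<le> phi n b" using phi_strict_mono[OF n \<open>a \<in> UU n\<close> \<open>b \<in> UU n\<close>]
    by (cases "a = b") auto
qed

lemma phi_inj: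
  assumes n: "n \<ge> 1" and "a \<in> UU n" "b \<in> UU n" "phi n a = phi n b"
  shows "a = b"
  using phi_mono_iff[OF n \<open>a \<in> UU n\<close> \<open>b \<in> UU n\<close>] phi_mono_iff[OF n \<open>b \<in> UU n\<close> \<open>a \<in> UU n\<close>] assms(4)
  by auto

lemma phi_cont: "continuous_on {u. cc n * u^n \<le> 1} (phi n)"
  unfolding phi_def by (intro continuous_intros)

lemma phi_cont_on: assumes "\<And>u. u \<in> S \<Longrightarrow> cc n * u^n \<le> 1" shows "continuous_on S (phi n)"
  using continuous_on_subset[OF phi_cont] assms by blast

definition sn :: "nat \<Rightarrow> real" where "sn n = (real n + 1) powr (1 / real n)"

lemma sn_facts:
  assumes n: "n \<ge> 1"
  shows "sn n > 0" "(sn n)^n = real n + 1" "(sn n)^2 = (real n + 1) powr (2 / real n)"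
proof -
  show "sn n > 0" by (simp add: sn_def)
  have "(sn n)^n = ((real n + 1) powr (1 / real n)) powr (real n)"
    by (simp add: sn_def powr_realpow)
  also have "\<dots> = real n + 1" using n by (simp add: powr_powr)
  finally show "(sn n)^n = real n + 1" .
  have "(sn n)^2 = ((real n + 1) powr (1 / real n)) powr 2"
    by (simp add: sn_def powr_realpow)
  also have "\<dots> = (real n + 1) powr (2 / real n)" by (simp add: powr_powr)
  finally show "(sn n)^2 = (real n + 1) powr (2 / real n)" .
qed

lemma R0_pos: assumes "n \<ge> 1" shows "R0 n > 0"
  using assms by (simp add: R0_def d_n_def)

lemma phi_sn: assumes n: "n \<ge> 1" shows "phi n (sn n) = R0 n"
proof -
  have c: "cc n * (sn n)^n = 2 / (real n + 2)" using sn_facts[OF n] cc_mult by simp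
  have "(phi n (sn n))^2 = 2 * W n (sn n)" using c by (intro phi_sq) simp
  also have "W n (sn n) = (sn n)^2 / 2 - (sn n)^2 * (sn n)^n / ((real n + 1) * (real n + 2))"
    by (simp add: W_def power_add mult.commute power2_eq_square)
  also have "(sn n)^2 * (sn n)^n / ((real n + 1) * (real n + 2)) = (sn n)^2 / (real n + 2)"
  proof -
    have a: "real n + 1 \<noteq> 0" by simp
    show ?thesis unfolding sn_facts(2)[OF n]
      using nonzero_mult_divide_mult_cancel_left[OF a, of "(sn n)^2" "real n + 2"] by (simp add: mult.commute)
  qed
  also have "(sn n)^2 / 2 - (sn n)^2 / (real n + 2) = (sn n)^2 * real n / (2 * (real n + 2))"
    by (simp add: field_simps)
  also have "\<dots> = d_n n" using sn_facts[OF n] by (simp add: d_n_def)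
  finally have "(phi n (sn n))^2 = (R0 n)^2" using n by (simp add: R0_def d_n_def)
  moreover have "phi n (sn n) \<ge> 0"
  proof -
    have "0 \<le> 1 - cc n * (sn n)^n" using c by simp
    thus ?thesis using sn_facts(1)[OF n] unfolding phi_def by simp
  qed
  moreover have "R0 n \<ge> 0" by (simp add: R0_def d_n_def)
  ultimately show ?thesis by (simp add: power2_eq_iff_nonneg)
qed

lemma phi_neg_even: assumes "even n" shows "phi n (-u) = - phi n u"
  using assms by (simp add: phi_def)

lemma phi_surj:
  assumes n: "n \<ge> 1" and w: "- R0 n < w" "w < R0 n"
  shows "\<exists>u\<in>UU n. phi n u = w"
proof -
  have pos: "\<exists>u\<in>UU n. phi n u = w'" if "0 \<le> w'" "w' < R0 n" for w'
  proof -
    have s: "sn n > 0" "(sn n)^n = real n + 1" using sn_facts[OF n] by auto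
    have cont: "continuous_on {0..sn n} (phi n)"
    proof (rule phi_cont_on)
      fix u assume "u \<in> {0..sn n}"
      hence "u^n \<le> (sn n)^n" by (intro power_mono) auto
      hence "cc n * u^n \<le> cc n * (real n + 1)" using cc_pos s by simp
      moreover have "2 / (real n + 2) \<le> 1" by simp
      ultimately show "cc n * u^n \<le> 1" using cc_mult[of n] by linarith
    qed
    have p0: "phi n 0 \<le> w'" using that by (simp add: phi_def)
    have p1: "w' \<le> phi n (sn n)" using that phi_sn[OF n] by simp
    obtain u where u: "0 \<le> u" "u \<le> sn n" "phi n u = w'"
      using IVT'[of "phi n" 0 w' "sn n", OF p0 p1 _ cont] s by auto
    have "u \<noteq> sn n" using u that phi_sn[OF n] by auto
    hence "u < sn n" using u by simp
    hence "u^n < (sn n)^n" using u n by (intro power_strict_mono) auto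
    thus ?thesis using u s by (auto simp: UU_def)
  qed
  show ?thesis
  proof (cases "w \<ge> 0")
    case True thus ?thesis using pos w by auto
  next
    case False
    show ?thesis
    proof (cases "even n")
      case True
      obtain u where u: "u \<in> UU n" "phi n u = - w" using pos[of "-w"] w False by auto
      have "-u \<in> UU n" using u True by (simp add: UU_def)
      moreover have "phi n (-u) = w" using u phi_neg_even[OF True, of u] by simp
      ultimately show ?thesis by blast
    next
      case odd: False
      have R: "R0 n > 0" using R0_pos[OF n] .
      have cnn: "u^n \<le> 0" if "u \<le> 0" for u :: real
      proof (cases "u = 0")
        case True thus ?thesis using n by (simp add: zero_power)
      next
        case False
        hence "u < 0" using that by simp
        hence "u^n < 0" using odd power_less_zero_eq[of u n] by simp
        thus ?thesis by (rule less_imp_le)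
      qed
      have cont: "continuous_on {- R0 n..0} (phi n)"
      proof (rule phi_cont_on)
        fix u assume "u \<in> {- R0 n..0}"
        hence "u^n \<le> 0" using cnn by auto
        hence "cc n * u^n \<le> 0" using cc_pos[of n] by (intro mult_nonneg_nonpos) auto
        thus "cc n * u^n \<le> 1" by linarith
      qed
      have pR: "phi n (- R0 n) \<le> - R0 n"
      proof -
        have "(- R0 n)^n \<le> 0" using cnn R by simp
        hence "cc n * (- R0 n)^n \<le> 0" using cc_pos[of n] by (intro mult_nonneg_nonpos) auto
        hence "1 \<le> sqrt (1 - cc n * (- R0 n)^n)" by simp
        hence "R0 n * 1 \<le> R0 n * sqrt (1 - cc n * (- R0 n)^n)" using R by (intro mult_left_mono) auto
        thus ?thesis unfolding phi_def by simp
      qed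
      have p0: "phi n (- R0 n) \<le> w" using pR w by linarith
      have p1: "w \<le> phi n 0" using False by (simp add: phi_def)
      have R': "- R0 n \<le> 0" using R by simp
      obtain u where u: "- R0 n \<le> u" "u \<le> 0" "phi n u = w"
        using IVT'[of "phi n" "- R0 n" w 0, OF p0 p1 R' cont] by blast
      have "u^n \<le> 0" using cnn u by auto
      hence "u \<in> UU n" unfolding UU_def mem_Collect_eq by (smt (verit) of_nat_0_le_iff)
      thus ?thesis using u by blast
    qed
  qed
qed

definition psi :: "nat \<Rightarrow> real \<Rightarrow> real" where "psi n w = (THE u. u \<in> UU n \<and> phi n u = w)"
definition dpsi :: "nat \<Rightarrow> real \<Rightarrow> real" where "dpsi n w = 1 / dphi n (psi n w)"

lemma psi_phi: assumes n: "n \<ge> 1" and "u \<in> UU n" shows "psi n (phi n u) = u"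
  unfolding psi_def using assms phi_inj[OF n] by (intro the_equality) auto

lemma psi_in:
  assumes n: "n \<ge> 1" and w: "- R0 n < w" "w < R0 n"
  shows "psi n w \<in> UU n" "phi n (psi n w) = w"
proof -
  obtain u where "u \<in> UU n" "phi n u = w" using phi_surj[OF n w] by blast
  thus "psi n w \<in> UU n" "phi n (psi n w) = w" using psi_phi[OF n] by auto
qed

lemma psi_mono_iff:
  assumes n: "n \<ge> 1" and "- R0 n < a" "a < R0 n" "- R0 n < b" "b < R0 n"
  shows "psi n a \<le> psi n b \<longleftrightarrow> a \<le> b"
  using phi_mono_iff[OF n psi_in(1)[OF n] psi_in(1)[OF n]] psi_in(2)[OF n] assms by metis

lemma psi_0: assumes n: "n \<ge> 1" shows "psi n 0 = 0"
proof -
  have "(0::real) \<in> UU n" using n by (simp add: UU_def zero_power)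
  thus ?thesis using psi_phi[OF n, of 0] by (simp add: phi_def)
qed

lemma isCont_inv_interval:
  fixes f g :: "real \<Rightarrow> real"
  assumes "continuous_on {a..b} f" "\<And>x. x \<in> {a..b} \<Longrightarrow> g (f x) = x"
    "\<And>y. y \<in> {c..d} \<Longrightarrow> g y \<in> {a..b} \<and> f (g y) = y" "c < y" "y < d"
  shows "isCont g y"
proof -
  have "continuous_on (f ` {a..b}) g" using assms by (intro continuous_on_inv) auto
  moreover have "{c..d} \<subseteq> f ` {a..b}" using assms(3) by (metis image_eqI subsetI)
  ultimately have "continuous_on {c..d} g" by (rule continuous_on_subset)
  thus ?thesis using assms by (intro continuous_on_interior[of "{c..d}"]) auto
qed

lemma psi_isCont:
  assumes n: "n \<ge> 1" and w: "- R0 n < w" "w < R0 n"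
  shows "isCont (psi n) w"
proof -
  define c where "c = (w - R0 n) / 2"
  define d where "d = (w + R0 n) / 2"
  have cd: "- R0 n < c" "c < w" "w < d" "d < R0 n" using w by (auto simp: c_def d_def)
  have sub: "y \<in> {c..d} \<Longrightarrow> - R0 n < y \<and> y < R0 n" for y using cd by auto
  have ab: "{psi n c..psi n d} \<subseteq> UU n" using UU_interval psi_in(1)[OF n] cd
    by (smt (verit) atLeastAtMost_iff subsetI)
  show ?thesis
  proof (rule isCont_inv_interval[where f="phi n" and a="psi n c" and b="psi n d" and c=c and d=d])
    show "continuous_on {psi n c..psi n d} (phi n)"
    proof (rule phi_cont_on)
      fix u assume "u \<in> {psi n c..psi n d}"
      hence "u \<in> UU n" using ab by auto
      thus "cc n * u^n \<le> 1" using UU_cc[of u n] by simp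
    qed
    show "psi n (phi n x) = x" if "x \<in> {psi n c..psi n d}" for x using ab that psi_phi[OF n] by auto
    show "psi n y \<in> {psi n c..psi n d} \<and> phi n (psi n y) = y" if "y \<in> {c..d}" for y
      using that sub[OF that] psi_mono_iff[OF n] cd psi_in(2)[OF n] by auto
  qed (use cd in auto)
qed

lemma psi_deriv:
  assumes n: "n \<ge> 1" and w: "- R0 n < w" "w < R0 n"
  shows "(psi n has_real_derivative dpsi n w) (at w)"
proof -
  have u: "psi n w \<in> UU n" using psi_in[OF n w] by auto
  have "(psi n has_real_derivative inverse (dphi n (psi n w))) (at w)"
    by (rule DERIV_inverse_function[where f="phi n" and a="- R0 n" and b="R0 n"])
       (use phi_deriv[OF n UU_cc[OF u]] dphi_pos[OF u] w psi_in(2)[OF n] psi_isCont[OF n w] in auto)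
  thus ?thesis by (simp add: dpsi_def divide_inverse)
qed

lemma psi_cont: assumes n: "n \<ge> 1" shows "continuous_on {- R0 n<..<R0 n} (psi n)"
  using psi_isCont[OF n] by (simp add: continuous_at_imp_continuous_on)

lemma dphi_cont: "continuous_on {u. cc n * u^n < 1} (dphi n)"
  unfolding dphi_def by (intro continuous_intros) auto

lemma dpsi_pos: assumes n: "n \<ge> 1" and w: "- R0 n < w" "w < R0 n" shows "dpsi n w > 0"
  using dphi_pos[OF psi_in(1)[OF n w]] by (simp add: dpsi_def)

lemma dpsi_cont: assumes n: "n \<ge> 1" shows "continuous_on {- R0 n<..<R0 n} (dpsi n)"
proof -
  have "continuous_on {- R0 n<..<R0 n} (\<lambda>w. dphi n (psi n w))"
    by (rule continuous_on_compose2[OF dphi_cont psi_cont[OF n]])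
       (use psi_in(1)[OF n] UU_cc in auto)
  moreover have "\<And>w. w \<in> {- R0 n<..<R0 n} \<Longrightarrow> dphi n (psi n w) \<noteq> 0"
    using dphi_pos psi_in(1)[OF n] by (metis greaterThanLessThan_iff less_irrefl)
  ultimately show ?thesis unfolding dpsi_def by (intro continuous_intros) auto
qed



definition uu :: "nat \<Rightarrow> real \<Rightarrow> real \<Rightarrow> real" where "uu n r t = psi n (r * sin t)"
definition pp :: "nat \<Rightarrow> real \<Rightarrow> real \<Rightarrow> real" where "pp n r t = dpsi n (r * sin t)"

lemma rsin_bound: fixes r R :: real assumes "0 \<le> r" "r < R" shows "- R < r * sin t" "r * sin t < R"
proof -
  have "\<bar>r * sin t\<bar> \<le> r" using assms by (simp add: abs_mult mult_left_le)
  thus "- R < r * sin t" "r * sin t < R" using assms by linarith+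
qed

lemma per_zero:
  fixes F f :: "real \<Rightarrow> real"
  assumes "\<And>t. (F has_real_derivative f t) (at t)" "F (2*pi) = F 0"
  shows "(f has_integral 0) {0..2*pi}"
proof -
  have "(f has_integral (F (2*pi) - F 0)) {0..2*pi}"
    by (rule fundamental_theorem_of_calculus)
       (use assms(1) in \<open>auto simp: has_real_derivative_iff_has_vector_derivative[symmetric]
            intro: has_field_derivative_at_within\<close>)
  thus ?thesis using assms(2) by simp
qed

definition JJ :: "nat \<Rightarrow> nat \<Rightarrow> real \<Rightarrow> real" where
  "JJ n k r = integral {0..2*pi} (\<lambda>t. uu n r t ^ k * pp n r t)"
definition II :: "nat \<Rightarrow> nat \<Rightarrow> real \<Rightarrow> real" where
  "II n k r = integral {0..2*pi} (\<lambda>t. uu n r t ^ k * (r * cos t)^2 * pp n r t)"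
definition KC :: "nat \<Rightarrow> nat \<Rightarrow> real \<Rightarrow> real" where
  "KC n k r = integral {0..2*pi} (\<lambda>t. uu n r t ^ k * pp n r t * (cos t)^2)"
definition KS :: "nat \<Rightarrow> nat \<Rightarrow> real \<Rightarrow> real" where
  "KS n k r = integral {0..2*pi} (\<lambda>t. uu n r t ^ k * pp n r t * (sin t)^2)"
definition SS :: "nat \<Rightarrow> nat \<Rightarrow> real \<Rightarrow> real" where
  "SS n k r = integral {0..2*pi} (\<lambda>t. psi n (r * sin t) ^ (k+1) * sin t)"

lemma lin3:
  fixes A B C :: "real \<Rightarrow> real"
  assumes "A integrable_on S" "B integrable_on S" "C integrable_on S"
  shows "integral S (\<lambda>t. x * A t - y * B t - z * C t) = x * integral S A - y * integral S B - z * integral S C"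
proof -
  have i: "(\<lambda>t. x * A t) integrable_on S" "(\<lambda>t. y * B t) integrable_on S" "(\<lambda>t. z * C t) integrable_on S"
    using assms by (auto intro: integrable_on_mult_right)
  have "integral S (\<lambda>t. x * A t - y * B t - z * C t) = integral S (\<lambda>t. x * A t - y * B t) - integral S (\<lambda>t. z * C t)"
    using i by (intro integral_diff integrable_diff) auto
  also have "integral S (\<lambda>t. x * A t - y * B t) = integral S (\<lambda>t. x * A t) - integral S (\<lambda>t. y * B t)"
    using i by (intro integral_diff) auto
  finally show ?thesis by simp
qed

lemma alg_X1:
  fixes u z vv p s h N q1 q2 :: real
  assumes "s = (u - z*u*q1) * p" "h = vv^2/2 + (u^2/2 - z*u^2*q1*q2)" "q1*(N+1) = 1" "q2*(N+2) = 1"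
  shows "h*(z*p) - ((3*N+4)*q2/2)*(z * vv^2*p) - (N*q2/2)*(z*u^2*p)
       = - ((N+1)*(z*(p * vv)) * vv + z*u*(-s)) * q2"
  using assms by algebra

lemma alg_X0:
  fixes u z vv p s h N q1 q2 :: real
  assumes "s = (u - z*u*q1) * p" "h = vv^2/2 + (u^2/2 - z*u^2*q1*q2)" "q1*(N+1) = 1" "q2*(N+2) = 1"
  shows "h*p - 1*(vv^2*p) - (N*q2/2*q1)*(z*u^2*p)
       = - ((p * vv) * vv + u*(-s)) / 2"
  using assms by algebra

context
  fixes n :: nat and r :: real
  assumes n: "n \<ge> 1" and r: "0 \<le> r" "r < R0 n"
begin

lemma rs: "- R0 n < r * sin t" "r * sin t < R0 n" using rsin_bound[OF r] by auto

lemma uu_in: "uu n r t \<in> UU n" "phi n (uu n r t) = r * sin t"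
  using psi_in[OF n rs(1)[of t] rs(2)[of t]] by (auto simp: uu_def)

lemma pp_pos: "pp n r t > 0" using dpsi_pos[OF n rs(1)[of t] rs(2)[of t]] by (simp add: pp_def)

lemma uu_deriv: "((\<lambda>t. uu n r t) has_real_derivative pp n r t * (r * cos t)) (at t)"
  unfolding uu_def pp_def
  by (rule DERIV_chain2[where g="\<lambda>t. r * sin t" and x=t, OF psi_deriv[OF n rs(1)[of t] rs(2)[of t]]]) (auto intro!: derivative_eq_intros)

lemma cont_uu [continuous_intros]: "continuous_on S (uu n r)"
  unfolding uu_def
  by (rule continuous_on_compose2[OF psi_cont[OF n]]) (auto intro!: continuous_intros simp: rs)

lemma cont_pp [continuous_intros]: "continuous_on S (pp n r)"
  unfolding pp_def
  by (rule continuous_on_compose2[OF dpsi_cont[OF n]]) (auto intro!: continuous_intros simp: rs)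

lemma F1: "r * sin t = Wd n (uu n r t) * pp n r t"
proof -
  have u: "uu n r t \<in> UU n" by (rule uu_in)
  have "Wd n (uu n r t) * pp n r t = phi n (uu n r t) * dphi n (uu n r t) / dphi n (uu n r t)"
    using phi_dphi[OF UU_cc[OF u]] by (simp add: pp_def dpsi_def uu_def)
  also have "\<dots> = phi n (uu n r t)" using dphi_pos[OF u] by simp
  finally show ?thesis using uu_in by simp
qed

lemma F2: "(r * cos t)^2 / 2 + W n (uu n r t) = r^2 / 2"
proof -
  have u: "uu n r t \<in> UU n" by (rule uu_in)
  have "2 * W n (uu n r t) = (r * sin t)^2"
    using phi_sq[of n "uu n r t"] UU_cc[OF u] uu_in by simp
  hence "W n (uu n r t) = (r * sin t)^2 / 2" by simp
  moreover have e: "r^2 * (cos t)^2 + r^2 * (sin t)^2 = r^2"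
  proof -
    have "r^2 * (cos t)^2 + r^2 * (sin t)^2 = r^2 * ((sin t)^2 + (cos t)^2)"
      by (simp only: distrib_left add.commute)
    also have "\<dots> = r^2" by (simp only: sin_cos_squared_add mult_1_right)
    finally show ?thesis .
  qed
  ultimately show ?thesis by (simp add: power_mult_distrib algebra_simps add_divide_distrib)
qed


lemma integ [intro]: "continuous_on {0..2*pi} f \<Longrightarrow> (f::real\<Rightarrow>real) integrable_on {0..2*pi}"
  by (rule integrable_continuous_interval)

lemma uu_pow_deriv:
  "((\<lambda>t. uu n r t ^ k) has_real_derivative real k * (pp n r t * (r * cos t) * uu n r t ^ (k - Suc 0))) (at t)"
  by (rule DERIV_power[OF uu_deriv])

lemma rcos_deriv: "((\<lambda>t. r * cos t) has_real_derivative - (r * sin t)) (at t)"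
  by (auto intro!: derivative_eq_intros)

lemma Wd_expand: "Wd n u = u - u^n * u / (real n + 1)"
  by (simp add: Wd_def power_Suc2)

lemma W_expand: "W n u = u^2/2 - u^n * u^2 / ((real n + 1) * (real n + 2))"
  by (simp add: W_def power_add power2_eq_square)

lemma X1: "(r^2/2) * JJ n n r = ((3*real n+4)/(real n+2)/2) * II n n r + (real n/(real n+2)/2) * JJ n (n+2) r"
proof -
  define q1 where "q1 = 1 / (real n + 1)"
  define q2 where "q2 = 1 / (real n + 2)"
  have q: "q1 * (real n + 1) = 1" "q2 * (real n + 2) = 1" by (simp_all add: q1_def q2_def)
  define F where "F t = uu n r t ^ (n+1) * (r * cos t)" for t
  define F' where "F' t = real (n+1) * (pp n r t * (r * cos t) * uu n r t ^ n) * (r * cos t)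
        + uu n r t ^ (n+1) * (- (r * sin t))" for t
  have dF: "(F has_real_derivative F' t) (at t)" for t
    unfolding F_def F'_def
    using DERIV_mult[OF uu_pow_deriv[where k="n+1" and t=t] rcos_deriv[of t]]
    by (rule DERIV_cong) (simp add: algebra_simps)
  have F0: "F (2*pi) = F 0" by (simp add: F_def uu_def)
  have z: "(F' has_integral 0) {0..2*pi}" by (rule per_zero[OF dF F0])
  define g where "g t = (r^2/2) * (uu n r t ^ n * pp n r t)
      - ((3*real n+4)*q2/2) * (uu n r t ^ n * (r * cos t)^2 * pp n r t)
      - (real n*q2/2) * (uu n r t ^ (n+2) * pp n r t)" for t
  have gF: "g t = - F' t * q2" for t
  proof -
    have e1: "r * sin t = (uu n r t - uu n r t ^ n * uu n r t * q1) * pp n r t"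
      using F1[of t] by (simp add: Wd_expand q1_def)
    have e2: "r^2/2 = (r * cos t)^2/2 + (uu n r t^2/2 - uu n r t ^ n * uu n r t^2*q1*q2)"
      using F2[of t] by (simp add: W_expand q1_def q2_def)
    note A = alg_X1[OF e1 e2 q]
    have "F' t = (real n+1)*(uu n r t ^ n*(pp n r t * (r * cos t))) * (r * cos t) + uu n r t ^ n*uu n r t*(-(r * sin t))"
      by (simp add: F'_def power_Suc2 algebra_simps)
    thus ?thesis unfolding g_def power_add using A by simp
  qed
  have "(g has_integral (- 0 * q2)) {0..2*pi}"
    unfolding gF by (intro has_integral_mult_left has_integral_neg z)
  hence "integral {0..2*pi} g = 0" by (simp add: integral_unique)
  moreover have "integral {0..2*pi} g = (r^2/2) * JJ n n r - ((3*real n+4)*q2/2) * II n n r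
      - (real n*q2/2) * JJ n (n+2) r"
    unfolding g_def JJ_def II_def by (intro lin3 integ continuous_intros)
  ultimately have "(r^2/2) * JJ n n r = ((3*real n+4)*q2/2) * II n n r + (real n*q2/2) * JJ n (n+2) r"
    by linarith
  moreover have "(3*real n+4)*q2/2 = (3*real n+4)/(real n+2)/2" "real n*q2/2 = real n/(real n+2)/2"
    by (simp_all add: q2_def)
  ultimately show ?thesis by (simp only:)
qed

lemma X0: "(r^2/2) * JJ n 0 r = II n 0 r + (real n/(real n+2)/2/(real n + 1)) * JJ n (n+2) r"
proof -
  define q1 where "q1 = 1 / (real n + 1)"
  define q2 where "q2 = 1 / (real n + 2)"
  have q: "q1 * (real n + 1) = 1" "q2 * (real n + 2) = 1" by (simp_all add: q1_def q2_def)
  define F where "F t = uu n r t * (r * cos t)" for t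
  define F' where "F' t = pp n r t * (r * cos t) * (r * cos t) + uu n r t * (- (r * sin t))" for t
  have dF: "(F has_real_derivative F' t) (at t)" for t
    unfolding F_def F'_def
    using DERIV_mult[OF uu_deriv[of t] rcos_deriv[of t]]
    by (rule DERIV_cong) (simp add: algebra_simps)
  have F0: "F (2*pi) = F 0" by (simp add: F_def uu_def)
  have z: "(F' has_integral 0) {0..2*pi}" by (rule per_zero[OF dF F0])
  define g where "g t = (r^2/2) * (uu n r t ^ 0 * pp n r t)
      - 1 * (uu n r t ^ 0 * (r * cos t)^2 * pp n r t)
      - (real n*q2/2*q1) * (uu n r t ^ (n+2) * pp n r t)" for t
  have gF: "g t = - F' t / 2" for t
  proof -
    have e1: "r * sin t = (uu n r t - uu n r t ^ n * uu n r t * q1) * pp n r t"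
      using F1[of t] by (simp add: Wd_expand q1_def)
    have e2: "r^2/2 = (r * cos t)^2/2 + (uu n r t^2/2 - uu n r t ^ n * uu n r t^2*q1*q2)"
      using F2[of t] by (simp add: W_expand q1_def q2_def)
    note A = alg_X0[OF e1 e2 q]
    show ?thesis unfolding g_def F'_def power_add using A by simp
  qed
  have "(g has_integral (- 0 / 2)) {0..2*pi}"
    unfolding gF by (intro has_integral_divide has_integral_neg z)
  hence "integral {0..2*pi} g = 0" by (simp add: integral_unique)
  moreover have "integral {0..2*pi} g = (r^2/2) * JJ n 0 r - 1 * II n 0 r
      - (real n*q2/2*q1) * JJ n (n+2) r"
    unfolding g_def JJ_def II_def by (intro lin3 integ continuous_intros)
  ultimately have "(r^2/2) * JJ n 0 r = II n 0 r + (real n*q2/2*q1) * JJ n (n+2) r"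
    by linarith
  moreover have "real n*q2/2*q1 = real n/(real n+2)/2/(real n + 1)"
    by (simp add: q1_def q2_def)
  ultimately show ?thesis by (simp only:)
qed

lemma Y1: "real (k+1) * r * KC n k r = SS n k r"
proof -
  define F where "F t = uu n r t ^ (k+1) * cos t" for t
  define F' where "F' t = real (k+1) * (pp n r t * (r * cos t) * uu n r t ^ k) * cos t
        + uu n r t ^ (k+1) * (- sin t)" for t
  have dF: "(F has_real_derivative F' t) (at t)" for t
    unfolding F_def F'_def
    using DERIV_mult[OF uu_pow_deriv[where k="k+1" and t=t] DERIV_cos[of t]]
    by (rule DERIV_cong) (simp add: algebra_simps)
  have F0: "F (2*pi) = F 0" by (simp add: F_def uu_def)
  have z: "(F' has_integral 0) {0..2*pi}" by (rule per_zero[OF dF F0])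
  hence "integral {0..2*pi} F' = 0" by (simp add: integral_unique)
  moreover have "integral {0..2*pi} F' = (real (k+1) * r) * KC n k r - SS n k r"
  proof -
    have "F' = (\<lambda>t. (real (k+1) * r) * (uu n r t ^ k * pp n r t * (cos t)^2) - uu n r t ^ (k+1) * sin t)"
      by (rule ext) (simp add: F'_def power2_eq_square algebra_simps)
    hence "integral {0..2*pi} F' = integral {0..2*pi} (\<lambda>t. (real (k+1) * r) * (uu n r t ^ k * pp n r t * (cos t)^2))
        - integral {0..2*pi} (\<lambda>t. uu n r t ^ (k+1) * sin t)"
      by (simp only:) (rule integral_diff; auto intro!: integ continuous_intros)
    thus ?thesis unfolding KC_def SS_def uu_def by simp
  qed
  ultimately show ?thesis by simp
qed

lemma II_KC: "II n k r = r^2 * KC n k r"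
proof -
  have "II n k r = integral {0..2*pi} (\<lambda>t. r^2 * (uu n r t ^ k * pp n r t * (cos t)^2))"
    unfolding II_def by (rule integral_cong) (simp add: power_mult_distrib algebra_simps)
  thus ?thesis by (simp add: KC_def)
qed

lemma JJ_split: "JJ n k r = KC n k r + KS n k r"
proof -
  have "JJ n k r = integral {0..2*pi} (\<lambda>t. uu n r t ^ k * pp n r t * (cos t)^2 + uu n r t ^ k * pp n r t * (sin t)^2)"
    unfolding JJ_def
  proof (rule integral_cong)
    fix t
    have "uu n r t ^ k * pp n r t * (cos t)^2 + uu n r t ^ k * pp n r t * (sin t)^2
        = uu n r t ^ k * pp n r t * ((sin t)^2 + (cos t)^2)" by (simp only: distrib_left add.commute)
    thus "uu n r t ^ k * pp n r t = uu n r t ^ k * pp n r t * (cos t)^2 + uu n r t ^ k * pp n r t * (sin t)^2"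
      by (simp only: sin_cos_squared_add mult_1_right)
  qed
  also have "\<dots> = KC n k r + KS n k r" unfolding KC_def KS_def
    by (rule integral_add) (auto intro!: integ continuous_intros)
  finally show ?thesis .
qed

end



lemma psi_pos:
  assumes n: "n \<ge> 1" and w: "0 < w" "w < R0 n"
  shows "psi n w > 0" "psi n (-w) < 0"
proof -
  have R: "R0 n > 0" using R0_pos[OF n] .
  have "psi n 0 \<le> psi n w" using psi_mono_iff[OF n, of 0 w] w R by auto
  moreover have "psi n w \<noteq> 0" using psi_in(2)[OF n, of w] w by (auto simp: phi_def)
  ultimately show "psi n w > 0" using psi_0[OF n] by simp
  have "psi n (-w) \<le> psi n 0" using psi_mono_iff[OF n, of "-w" 0] w R by auto
  moreover have "psi n (-w) \<noteq> 0" using psi_in(2)[OF n, of "-w"] w by (auto simp: phi_def)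
  ultimately show "psi n (-w) < 0" using psi_0[OF n] by simp
qed

lemma sq_le_self: fixes x :: real assumes "0 \<le> x" "x \<le> 1" shows "x^2 \<le> x"
  using mult_left_le[OF assms(2) assms(1)] by (simp add: power2_eq_square)

lemma parity:
  assumes n: "n \<ge> 1" and k: "even k \<longleftrightarrow> even n" and w: "0 < w" "w < R0 n"
  shows "psi n w ^ k * dpsi n w + psi n (-w) ^ k * dpsi n (-w) > 0"
proof -
  have R: "R0 n > 0" using R0_pos[OF n] .
  have w': "- R0 n < -w" "-w < R0 n" "- R0 n < w" using w by auto
  define a where "a = psi n w"
  define b where "b = psi n (-w)"
  have a: "a > 0" and b: "b < 0" using psi_pos[OF n w] by (auto simp: a_def b_def)
  have da: "dpsi n w > 0" and db: "dpsi n (-w) > 0"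
    using dpsi_pos[OF n] w' w by auto
  show ?thesis
  proof (cases "even n")
    case True
    hence ek: "even k" using k by simp
    have "a ^ k > 0" using a by simp
    hence "a ^ k * dpsi n w > 0" using da by simp
    moreover have "b ^ k * dpsi n (-w) \<ge> 0" using zero_le_even_power[OF ek, of b] db by simp
    ultimately show ?thesis unfolding a_def b_def by linarith
  next
    case odd: False
    hence ok: "odd k" using k by simp
    have aU: "a \<in> UU n" and bU: "b \<in> UU n" using psi_in(1)[OF n] w' w by (auto simp: a_def b_def)
    have pa: "phi n a = w" and pb: "phi n b = -w" using psi_in(2)[OF n] w' w by (auto simp: a_def b_def)
    have an: "a^n > 0" using a by simp
    have bn: "b^n < 0" using b odd by (simp add: power_less_zero_eq)
    have c: "cc n > 0" by (rule cc_pos)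
    have "sqrt (1 - cc n * a^n) < 1" using c an UU_cc[OF aU] by simp
    hence "a * sqrt (1 - cc n * a^n) < a" using a by simp
    hence wa: "w < a" using pa by (simp add: phi_def)
    have cb: "cc n * b^n < 0" using mult_pos_neg[OF c bn] .
    hence "1 \<le> sqrt (1 - cc n * b^n)" by simp
    hence "(-b) * 1 \<le> (-b) * sqrt (1 - cc n * b^n)" using b by (intro mult_left_mono) auto
    hence bw: "-b \<le> w" using pb by (simp add: phi_def)
    have ab: "-b < a" using wa bw by simp
    have dphia: "dphi n a \<le> 1"
    proof -
      have q: "0 < 1 - cc n * a^n" using UU_cc[OF aU] by simp
      have x0: "0 \<le> 1 - a^n / (real n + 1)" using aU by (simp add: UU_def field_simps)
      have "(1 - a^n / (real n + 1))^2 \<le> 1 - cc n * a^n"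
      proof -
        have an1: "a^n < real n + 1" using aU by (simp add: UU_def)
        have "(1 - a^n / (real n + 1))^2 = 1 - 2 * a^n / (real n + 1) + (a^n / (real n + 1))^2"
          by (simp add: power2_eq_square algebra_simps)
        also have "(a^n / (real n + 1))^2 \<le> a^n / (real n + 1)"
        proof -
          have "a^n / (real n + 1) \<le> 1" using an1 by simp
          moreover have "0 \<le> a^n / (real n + 1)" using an by simp
          ultimately show ?thesis by (rule sq_le_self[rotated])
        qed
        hence "1 - 2 * a^n / (real n + 1) + (a^n / (real n + 1))^2 \<le> 1 - a^n / (real n + 1)"
          by simp
        also have "\<dots> \<le> 1 - cc n * a^n"
        proof -
          have "cc n * (real n + 1) \<le> 1" using cc_mult[of n] by simp
          hence "cc n \<le> 1 / (real n + 1)" by (simp add: pos_le_divide_eq)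
          hence "cc n * a^n \<le> (1 / (real n + 1)) * a^n" using an by (intro mult_right_mono) auto
          thus ?thesis by simp
        qed
        finally show ?thesis .
      qed
      hence "1 - a^n / (real n + 1) \<le> sqrt (1 - cc n * a^n)" by (rule real_le_rsqrt)
      moreover have "sqrt (1 - cc n * a^n) > 0" using q by simp
      ultimately show ?thesis by (simp add: dphi_def)
    qed
    have dphib: "dphi n b \<ge> 1"
    proof -
      have q: "0 < 1 - cc n * b^n" using UU_cc[OF bU] by simp
      have "1 - cc n * b^n \<le> (1 - b^n / (real n + 1))^2"
      proof -
        have "(1 - b^n / (real n + 1))^2 = 1 - 2 * b^n / (real n + 1) + (b^n / (real n + 1))^2"
          by (simp add: power2_eq_square algebra_simps)
        moreover have "cc n * (real n + 1) \<le> 2" using cc_mult[of n] by (simp add: divide_le_eq)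
        hence "cc n \<le> 2 / (real n + 1)" by (simp add: pos_le_divide_eq)
        hence "- cc n * b^n \<le> - (2 / (real n + 1)) * b^n"
          using mult_right_mono_neg[of "cc n" "2 / (real n + 1)" "b^n"] less_imp_le[OF bn] by simp
        moreover have "0 \<le> (b^n / (real n + 1))^2" by simp
        moreover have "2 * b ^ n / (real n + 1) = (2 / (real n + 1)) * b^n" by simp
        ultimately show ?thesis by linarith
      qed
      hence "sqrt (1 - cc n * b^n) \<le> sqrt ((1 - b^n / (real n + 1))^2)" by (rule real_sqrt_le_mono)
      moreover have "0 \<le> 1 - b^n / (real n + 1)"
      proof -
        have "b^n / (real n + 1) \<le> 0" using divide_nonpos_pos[OF less_imp_le[OF bn], of "real n + 1"] by simp
        thus ?thesis by linarith
      qed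
      ultimately have "sqrt (1 - cc n * b^n) \<le> 1 - b^n / (real n + 1)" by simp
      moreover have "sqrt (1 - cc n * b^n) > 0" using q by simp
      ultimately show ?thesis by (simp add: dphi_def)
    qed
    have "dpsi n w \<ge> 1" using dphia dphi_pos[OF aU] by (simp add: dpsi_def a_def)
    moreover have "dpsi n (-w) \<le> 1" using dphib by (simp add: dpsi_def b_def)
    ultimately have dd: "dpsi n (-w) \<le> dpsi n w" by linarith
    have "(-b)^k < a^k" using ab b by (intro power_strict_mono) (auto simp: odd_pos[OF ok])
    have "b^k = - ((-b)^k)" using ok by simp
    have "(-b)^k * dpsi n (-w) < a^k * dpsi n (-w)"
      using \<open>(-b)^k < a^k\<close> db by simp
    also have "\<dots> \<le> a^k * dpsi n w" using dd a by (intro mult_left_mono) auto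
    finally show ?thesis using \<open>b^k = - ((-b)^k)\<close> unfolding a_def[symmetric] b_def[symmetric] by simp
  qed
qed


lemma SS_deriv:
  assumes n: "n \<ge> 1" and r: "0 < r" "r < R0 n"
  shows "(SS n k has_real_derivative real (k+1) * KS n k r) (at r)"
proof -
  define U where "U = {0<..<R0 n}"
  have bnd: "- R0 n < x * sin t \<and> x * sin t < R0 n" if "x \<in> U" for x t
    using rsin_bound[of x "R0 n" t] that by (auto simp: U_def)
  define fx where "fx x t = real (k+1) * (dpsi n (x * sin t) * sin t * psi n (x * sin t) ^ k) * sin t" for x t
  have c1: "continuous_on (U \<times> {0..2*pi}) (\<lambda>p. psi n (fst p * sin (snd p)))"
    by (rule continuous_on_compose2[OF psi_cont[OF n]]) (auto intro!: continuous_intros dest: bnd)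
  have c2: "continuous_on (U \<times> {0..2*pi}) (\<lambda>p. dpsi n (fst p * sin (snd p)))"
    by (rule continuous_on_compose2[OF dpsi_cont[OF n]]) (auto intro!: continuous_intros dest: bnd)
  have "((\<lambda>x. integral (cbox 0 (2*pi)) (\<lambda>t. psi n (x * sin t) ^ (k+1) * sin t)) has_field_derivative
      integral (cbox 0 (2*pi)) (fx r)) (at r within U)"
  proof (rule leibniz_rule_field_derivative)
    fix x t assume x: "x \<in> U" and "t \<in> cbox 0 (2*pi)"
    have d: "((\<lambda>x. psi n (x * sin t)) has_real_derivative dpsi n (x * sin t) * sin t) (at x)"
      by (rule DERIV_chain2[where g="\<lambda>x. x * sin t" and x=x, OF psi_deriv[OF n]])
         (use bnd[OF x, of t] in \<open>auto intro!: derivative_eq_intros\<close>)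
    show "((\<lambda>x. psi n (x * sin t) ^ (k+1) * sin t) has_field_derivative fx x t) (at x within U)"
      unfolding fx_def
      by (rule has_field_derivative_at_within, rule DERIV_mult[OF DERIV_power[OF d] DERIV_const, THEN DERIV_cong])
         simp
  next
    fix x assume x: "x \<in> U"
    have "continuous_on {0..2*pi} (\<lambda>t. psi n (x * sin t))"
      by (rule continuous_on_compose2[OF psi_cont[OF n]]) (use bnd[OF x] in \<open>auto intro!: continuous_intros\<close>)
    thus "(\<lambda>t. psi n (x * sin t) ^ (k+1) * sin t) integrable_on cbox 0 (2*pi)"
      unfolding cbox_interval by (intro integrable_continuous_interval continuous_intros)
  next
    show "continuous_on (U \<times> cbox 0 (2*pi)) (\<lambda>(x, t). fx x t)"
      unfolding cbox_interval fx_def split_beta'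
      by (intro continuous_intros c1 c2)
  next
    show "r \<in> U" "convex U" using r by (auto simp: U_def)
  qed
  moreover have "at r within U = at r" by (rule at_within_open) (use r in \<open>auto simp: U_def\<close>)
  moreover have "SS n k = (\<lambda>x. integral (cbox 0 (2*pi)) (\<lambda>t. psi n (x * sin t) ^ (k+1) * sin t))"
    by (rule ext) (simp add: SS_def cbox_interval)
  ultimately have "(SS n k has_real_derivative integral {0..2*pi} (fx r)) (at r)"
    by (simp only: cbox_interval)
  moreover have "integral {0..2*pi} (fx r) = real (k+1) * KS n k r"
  proof -
    have "integral {0..2*pi} (fx r) = integral {0..2*pi} (\<lambda>t. real (k+1) * (uu n r t ^ k * pp n r t * (sin t)^2))"
    proof (rule integral_cong)
      fix t
      show "fx r t = real (k+1) * (uu n r t ^ k * pp n r t * (sin t)^2)"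
        unfolding fx_def uu_def pp_def power2_eq_square by (simp only: ac_simps)
    qed
    thus ?thesis by (simp add: KS_def)
  qed
  ultimately show ?thesis by simp
qed

lemma II_SS:
  assumes n: "n \<ge> 1" and r: "0 \<le> r" "r < R0 n"
  shows "II n k r = r * SS n k r / real (k+1)"
  using Y1[OF n r, of k] II_KC[OF n r, of k] by (simp add: field_simps power2_eq_square)

lemma II_deriv:
  assumes n: "n \<ge> 1" and r: "0 < r" "r < R0 n"
  shows "(II n k has_real_derivative r * JJ n k r) (at r)"
proof -
  have r': "0 \<le> r" using r by simp
  have d: "((\<lambda>x. x * SS n k x / real (k+1)) has_real_derivative
      (1 * SS n k r + real (k+1) * KS n k r * r) / real (k+1)) (at r)"
    using DERIV_cdivide[OF DERIV_mult[OF DERIV_ident SS_deriv[OF n r]], where c="real (k+1)"] by simp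
  have "(1 * SS n k r + real (k+1) * KS n k r * r) / real (k+1) = r * JJ n k r"
  proof -
    have "SS n k r = real (k+1) * r * KC n k r" using Y1[OF n r' r(2), of k] by simp
    thus ?thesis using JJ_split[OF n r' r(2), of k] by (simp add: field_simps)
  qed
  with d have "((\<lambda>x. x * SS n k x / real (k+1)) has_real_derivative r * JJ n k r) (at r)" by simp
  thus ?thesis
    by (rule has_field_derivative_transform_within_open[where S="{0<..<R0 n}"])
       (use r II_SS[OF n] in auto)
qed

lemma R0_sqrt: assumes n: "n \<ge> 1" and h: "0 < h" "h < d_n n"
  shows "0 < sqrt (2*h)" "sqrt (2*h) < R0 n"
  using h by (auto simp: R0_def)

lemma Ih_deriv:
  assumes n: "n \<ge> 1" and h: "0 < h" "h < d_n n"
  shows "((\<lambda>h. II n k (sqrt (2*h))) has_real_derivative JJ n k (sqrt (2*h))) (at h)"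
proof -
  have dq: "((\<lambda>h. sqrt (2*h)) has_real_derivative inverse (sqrt (2*h)) / 2 * 2) (at h)"
    using h by (intro DERIV_chain2[OF DERIV_real_sqrt]) (auto intro!: derivative_eq_intros)
  have "((\<lambda>h. II n k (sqrt (2*h))) has_real_derivative
      (sqrt (2*h) * JJ n k (sqrt (2*h))) * (inverse (sqrt (2*h)) / 2 * 2)) (at h)"
    by (rule DERIV_chain2[OF II_deriv[OF n R0_sqrt[OF n h]] dq])
  moreover have "sqrt (2*h) > 0" using h by simp
  ultimately show ?thesis by (simp add: field_simps)
qed



lemma integral_pos_pt:
  fixes f :: "real \<Rightarrow> real"
  assumes c: "continuous_on {a..b} f" and ab: "a < b" and nn: "\<And>x. x \<in> {a..b} \<Longrightarrow> 0 \<le> f x"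
    and x0: "z \<in> {a..b}" "f z > 0"
  shows "integral {a..b} f > 0"
proof -
  have i: "f integrable_on {a..b}" using c by (rule integrable_continuous_interval)
  have ge: "integral {a..b} f \<ge> 0" using i nn by (rule integral_nonneg)
  have "integral {a..b} f \<noteq> 0"
  proof
    assume z: "integral {a..b} f = 0"
    have "(f has_integral 0) (cbox a b)" using i z by (simp add: has_integral_integrable_integral cbox_interval)
    hence "f z = 0"
      using has_integral_0_cbox_imp_0[of a b f z] c nn x0 ab by (auto simp: cbox_interval)
    thus False using x0 by simp
  qed
  thus ?thesis using ge by simp
qed

lemma sym_split:
  fixes f :: "real \<Rightarrow> real"
  assumes c: "continuous_on {0..2*pi} f"
  shows "integral {0..2*pi} f = integral {0..pi} (\<lambda>t. f t + f (t + pi))"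
proof -
  have i: "f integrable_on {0..2*pi}" using c by (rule integrable_continuous_interval)
  have "integral {0..2*pi} f = integral {0..pi} f + integral {pi..2*pi} f"
    using Henstock_Kurzweil_Integration.integral_combine[where a=0 and c=pi and b="2*pi" and f=f] i by simp
  moreover have "integral {pi..2*pi} f = integral {0..pi} (\<lambda>t. f (t + pi))"
  proof -
    have c2: "continuous_on {0 + pi..pi + pi} f" using continuous_on_subset[OF c] by auto
    have "integral {0..pi} (f \<circ> (\<lambda>x. x + pi)) = integral {0 + pi..pi + pi} f"
      by (rule integral_shift[OF c2])
    thus ?thesis by (simp add: o_def)
  qed
  moreover have "integral {0..pi} (\<lambda>t. f t + f (t + pi)) = integral {0..pi} f + integral {0..pi} (\<lambda>t. f (t + pi))"
  proof (rule integral_add)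
    show "f integrable_on {0..pi}" using continuous_on_subset[OF c] by (intro integrable_continuous_interval) auto
    have "continuous_on {0..pi} (f \<circ> (\<lambda>t. t + pi))"
      by (rule continuous_on_compose) (auto intro!: continuous_intros continuous_on_subset[OF c])
    thus "(\<lambda>t. f (t + pi)) integrable_on {0..pi}" by (simp add: o_def integrable_continuous_interval)
  qed
  ultimately show ?thesis by simp
qed

context
  fixes n :: nat and r :: real
  assumes n: "n \<ge> 1" and r: "0 < r" "r < R0 n"
begin

lemma r': "0 \<le> r" using r by simp

lemmas ctx = n r' r(2)

lemma cuu: "continuous_on S (\<lambda>t. uu n r t)" using cont_uu[OF ctx] by simp
lemma cpp: "continuous_on S (\<lambda>t. pp n r t)" using cont_pp[OF ctx] by simp
lemma cuu_sh: "continuous_on S (\<lambda>t. uu n r (t + c))"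
  by (rule continuous_on_compose2[OF cont_uu[OF ctx, of UNIV]]) (auto intro!: continuous_intros)
lemma cpp_sh: "continuous_on S (\<lambda>t. pp n r (t + c))"
  by (rule continuous_on_compose2[OF cont_pp[OF ctx, of UNIV]]) (auto intro!: continuous_intros)

lemma P1: "II n 0 r > 0"
  unfolding II_def
proof (rule integral_pos_pt[where z=0])
  show "continuous_on {0..2*pi} (\<lambda>t. uu n r t ^ 0 * (r * cos t)^2 * pp n r t)"
    by (intro continuous_on_mult continuous_on_power cuu cpp continuous_intros)
  show "0 \<le> uu n r t ^ 0 * (r * cos t)^2 * pp n r t" for t
    using pp_pos[OF ctx, of t] by simp
  show "0 < uu n r 0 ^ 0 * (r * cos 0)^2 * pp n r 0" using pp_pos[OF ctx, of 0] r by simp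
qed (auto simp: pi_gt_zero less_imp_le)

lemma P2: "real (n+1) * II n 0 r - II n n r > 0"
proof -
  have c0: "continuous_on {0..2*pi} (\<lambda>t. uu n r t ^ 0 * (r * cos t)^2 * pp n r t)"
    and cn: "continuous_on {0..2*pi} (\<lambda>t. uu n r t ^ n * (r * cos t)^2 * pp n r t)"
    by (intro continuous_on_mult continuous_on_power cuu cpp continuous_intros)+
  have "real (n+1) * II n 0 r - II n n r
      = integral {0..2*pi} (\<lambda>t. real (n+1) * (uu n r t ^ 0 * (r * cos t)^2 * pp n r t) - uu n r t ^ n * (r * cos t)^2 * pp n r t)"
    unfolding II_def
    by (subst integral_diff) (auto intro!: integrable_continuous_interval integrable_on_mult_right c0 cn continuous_intros ctx)
  also have "\<dots> > 0"
  proof (rule integral_pos_pt[where z=0])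
    show "continuous_on {0..2*pi} (\<lambda>t. real (n+1) * (uu n r t ^ 0 * (r * cos t)^2 * pp n r t) - uu n r t ^ n * (r * cos t)^2 * pp n r t)"
      by (intro continuous_on_diff continuous_on_mult continuous_on_power cuu cpp continuous_intros)
    show "0 \<le> real (n+1) * (uu n r t ^ 0 * (r * cos t)^2 * pp n r t) - uu n r t ^ n * (r * cos t)^2 * pp n r t" for t
    proof -
      have "uu n r t ^ n < real n + 1" using uu_in(1)[OF ctx, of t] by (simp add: UU_def)
      hence "0 \<le> (real (n+1) - uu n r t ^ n) * ((r * cos t)^2 * pp n r t)"
        using pp_pos[OF ctx, of t] by (intro mult_nonneg_nonneg) auto
      thus ?thesis by (simp add: algebra_simps)
    qed
    have "uu n r 0 = 0" using psi_0[OF n] by (simp add: uu_def)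
    thus "0 < real (n+1) * (uu n r 0 ^ 0 * (r * cos 0)^2 * pp n r 0) - uu n r 0 ^ n * (r * cos 0)^2 * pp n r 0"
      using pp_pos[OF ctx, of 0] r n by (simp add: zero_power)
  qed (auto simp: pi_gt_zero less_imp_le)
  finally show ?thesis .
qed

lemma sym_term:
  assumes k: "even k \<longleftrightarrow> even n" "k \<ge> 1" and t: "t \<in> {0..pi}"
  shows "0 \<le> uu n r t ^ k * pp n r t + uu n r (t + pi) ^ k * pp n r (t + pi)"
    "0 < sin t \<Longrightarrow> 0 < uu n r t ^ k * pp n r t + uu n r (t + pi) ^ k * pp n r (t + pi)"
proof -
  have e: "uu n r t ^ k * pp n r t + uu n r (t + pi) ^ k * pp n r (t + pi)
      = psi n (r * sin t) ^ k * dpsi n (r * sin t) + psi n (- (r * sin t)) ^ k * dpsi n (- (r * sin t))"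
    by (simp add: uu_def pp_def)
  have s0: "0 \<le> sin t" using t by (intro sin_ge_zero) auto
  have b: "r * sin t < R0 n" using rs(2)[OF ctx, of t] .
  show pos: "0 < uu n r t ^ k * pp n r t + uu n r (t + pi) ^ k * pp n r (t + pi)" if "0 < sin t"
    unfolding e using parity[OF n k(1) _ b] that r by simp
  show "0 \<le> uu n r t ^ k * pp n r t + uu n r (t + pi) ^ k * pp n r (t + pi)"
  proof (cases "sin t = 0")
    case True thus ?thesis unfolding e using psi_0[OF n] k(2) by (simp add: zero_power)
  next
    case False thus ?thesis using pos s0 by simp
  qed
qed

lemma P3: "II n n r > 0"
proof -
  have c: "continuous_on {0..2*pi} (\<lambda>t. uu n r t ^ n * (r * cos t)^2 * pp n r t)"
    by (intro continuous_on_mult continuous_on_power cuu cpp continuous_intros)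
  have "II n n r = integral {0..pi} (\<lambda>t. uu n r t ^ n * (r * cos t)^2 * pp n r t
       + uu n r (t + pi) ^ n * (r * cos (t + pi))^2 * pp n r (t + pi))"
    unfolding II_def by (rule sym_split[OF c])
  also have "\<dots> = integral {0..pi} (\<lambda>t. (r * cos t)^2 * (uu n r t ^ n * pp n r t + uu n r (t + pi) ^ n * pp n r (t + pi)))"
    by (rule integral_cong) (simp add: algebra_simps)
  also have "\<dots> > 0"
  proof (rule integral_pos_pt[where z="pi/4"])
    show "continuous_on {0..pi} (\<lambda>t. (r * cos t)^2 * (uu n r t ^ n * pp n r t + uu n r (t + pi) ^ n * pp n r (t + pi)))"
      by (intro continuous_on_mult continuous_on_add continuous_on_power cuu cpp cuu_sh cpp_sh continuous_intros)
    show "0 \<le> (r * cos t)^2 * (uu n r t ^ n * pp n r t + uu n r (t + pi) ^ n * pp n r (t + pi))" if "t \<in> {0..pi}" for t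
      using sym_term(1)[OF _ _ that, of n] n by simp
    have "0 < sin (pi/4)" by (rule sin_gt_zero) auto
    moreover have "0 < cos (pi/4)" by (rule cos_gt_zero) auto
    ultimately show "0 < (r * cos (pi/4))^2 * (uu n r (pi/4) ^ n * pp n r (pi/4) + uu n r (pi/4 + pi) ^ n * pp n r (pi/4 + pi))"
      using sym_term(2)[of n "pi/4"] n r by simp
  qed (auto simp: pi_gt_zero less_imp_le)
  finally show ?thesis .
qed

lemma P4: "JJ n (n+2) r \<ge> 0"
proof -
  have c: "continuous_on {0..2*pi} (\<lambda>t. uu n r t ^ (n+2) * pp n r t)"
    by (intro continuous_on_mult continuous_on_power cuu cpp continuous_intros)
  have "JJ n (n+2) r = integral {0..pi} (\<lambda>t. uu n r t ^ (n+2) * pp n r t + uu n r (t + pi) ^ (n+2) * pp n r (t + pi))"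
    unfolding JJ_def by (rule sym_split[OF c])
  also have "\<dots> \<ge> 0"
  proof (rule integral_nonneg)
    have "continuous_on {0..pi} (\<lambda>t. uu n r t ^ (n+2) * pp n r t + uu n r (t + pi) ^ (n+2) * pp n r (t + pi))"
      by (intro continuous_on_mult continuous_on_add continuous_on_power cuu cpp cuu_sh cpp_sh)
    thus "(\<lambda>t. uu n r t ^ (n+2) * pp n r t + uu n r (t + pi) ^ (n+2) * pp n r (t + pi)) integrable_on {0..pi}"
      by (rule integrable_continuous_interval)
    show "0 \<le> uu n r t ^ (n+2) * pp n r t + uu n r (t + pi) ^ (n+2) * pp n r (t + pi)" if "t \<in> {0..pi}" for t
      using sym_term(1)[OF _ _ that, of "n+2"] by simp
  qed
  finally show ?thesis .
qed

end



lemma vd_fst: "(y has_vector_derivative (a, b)) (at t) \<Longrightarrow> ((\<lambda>t. fst (y t)) has_real_derivative a) (at t)"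
  unfolding has_vector_derivative_def has_field_derivative_def
  by (drule has_derivative_fst, erule has_derivative_eq_rhs) (auto simp: mult.commute)

lemma vd_snd: "(y has_vector_derivative (a, b)) (at t) \<Longrightarrow> ((\<lambda>t. snd (y t)) has_real_derivative b) (at t)"
  unfolding has_vector_derivative_def has_field_derivative_def
  by (drule has_derivative_snd, erule has_derivative_eq_rhs) (auto simp: mult.commute)

lemma pow_diff_bound:
  fixes a b M :: real
  assumes "\<bar>a\<bar> \<le> M" "\<bar>b\<bar> \<le> M"
  shows "\<bar>a^k - b^k\<bar> \<le> real k * M^(k-1) * \<bar>a - b\<bar>"
proof -
  have M: "0 \<le> M" using assms by linarith
  have "\<bar>\<Sum>i<k. b^(k - Suc i) * a^i\<bar> \<le> (\<Sum>i<k. \<bar>b^(k - Suc i) * a^i\<bar>)" by (rule sum_abs)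
  also have "\<dots> \<le> (\<Sum>i<k. M^(k-1))"
  proof (rule sum_mono)
    fix i assume i: "i \<in> {..<k}"
    have "\<bar>b^(k - Suc i) * a^i\<bar> = \<bar>b\<bar>^(k - Suc i) * \<bar>a\<bar>^i" by (simp add: abs_mult power_abs)
    also have "\<dots> \<le> M^(k - Suc i) * M^i"
      using assms by (intro mult_mono power_mono) auto
    also have "\<dots> = M^(k-1)" using i by (simp add: power_add[symmetric])
    finally show "\<bar>b^(k - Suc i) * a^i\<bar> \<le> M^(k-1)" .
  qed
  also have "\<dots> = real k * M^(k-1)" by simp
  finally have s: "\<bar>\<Sum>i<k. b^(k - Suc i) * a^i\<bar> \<le> real k * M^(k-1)" .
  have "\<bar>a^k - b^k\<bar> = \<bar>a - b\<bar> * \<bar>\<Sum>i<k. b^(k - Suc i) * a^i\<bar>"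
    by (simp add: power_diff_sumr2 abs_mult)
  also have "\<dots> \<le> \<bar>a - b\<bar> * (real k * M^(k-1))" using s by (intro mult_left_mono) auto
  finally show ?thesis by (simp add: mult.commute mult.left_commute)
qed

lemma ode_unique:
  fixes x y :: "real \<Rightarrow> real \<times> real"
  assumes dy: "\<And>t. (y has_vector_derivative field n (y t)) (at t)"
    and dx: "\<And>t. (x has_vector_derivative field n (x t)) (at t)"
    and e0: "y 0 = x 0" and t1: "0 \<le> t1"
  shows "y t1 = x t1"
proof -
  have cy: "continuous_on {0..t1} y" using dy
    by (intro continuous_at_imp_continuous_on ballI has_vector_derivative_continuous) auto
  have cx: "continuous_on {0..t1} x" using dx
    by (intro continuous_at_imp_continuous_on ballI has_vector_derivative_continuous) auto
  obtain By where By0: "\<forall>z\<in>y ` {0..t1}. norm z \<le> By"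
    using compact_imp_bounded[OF compact_continuous_image[OF cy compact_Icc]] unfolding bounded_iff by blast
  have By: "norm (y t) \<le> By" if "t \<in> {0..t1}" for t using By0 that by blast
  obtain Bx where Bx0: "\<forall>z\<in>x ` {0..t1}. norm z \<le> Bx"
    using compact_imp_bounded[OF compact_continuous_image[OF cx compact_Icc]] unfolding bounded_iff by blast
  have Bx: "norm (x t) \<le> Bx" if "t \<in> {0..t1}" for t using Bx0 that by blast
  define M where "M = max By Bx"
  have My: "\<bar>fst (y t)\<bar> \<le> M" and Mx: "\<bar>fst (x t)\<bar> \<le> M" if "t \<in> {0..t1}" for t
  proof -
    have "\<bar>fst (y t)\<bar> \<le> norm (y t)" by (metis norm_fst_le prod.collapse real_norm_def)
    thus "\<bar>fst (y t)\<bar> \<le> M" using By[OF that] by (simp add: M_def)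
    have "\<bar>fst (x t)\<bar> \<le> norm (x t)" by (metis norm_fst_le prod.collapse real_norm_def)
    thus "\<bar>fst (x t)\<bar> \<le> M" using Bx[OF that] by (simp add: M_def)
  qed
  define K where "K = real (n+1) * M^n / (real n + 1)"
  define e where "e t = (fst (y t) - fst (x t))^2 + (snd (y t) - snd (x t))^2" for t
  define e' where "e' t = 2 * (fst (y t) - fst (x t)) * (snd (y t) - snd (x t))
      + 2 * (snd (y t) - snd (x t)) * ((- fst (y t) + fst (y t)^(n+1) / (real n + 1)) - (- fst (x t) + fst (x t)^(n+1) / (real n + 1)))" for t
  have de: "(e has_real_derivative e' t) (at t)" for t
  proof -
    have y1: "((\<lambda>t. fst (y t)) has_real_derivative snd (y t)) (at t)"
      and y2: "((\<lambda>t. snd (y t)) has_real_derivative - fst (y t) + fst (y t)^(n+1) / (real n + 1)) (at t)"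
      using vd_fst[of y "snd (y t)" "- fst (y t) + fst (y t)^(n+1) / (real n + 1)" t]
            vd_snd[of y "snd (y t)" "- fst (y t) + fst (y t)^(n+1) / (real n + 1)" t] dy[of t]
      by (auto simp: field_def)
    have x1: "((\<lambda>t. fst (x t)) has_real_derivative snd (x t)) (at t)"
      and x2: "((\<lambda>t. snd (x t)) has_real_derivative - fst (x t) + fst (x t)^(n+1) / (real n + 1)) (at t)"
      using vd_fst[of x "snd (x t)" "- fst (x t) + fst (x t)^(n+1) / (real n + 1)" t]
            vd_snd[of x "snd (x t)" "- fst (x t) + fst (x t)^(n+1) / (real n + 1)" t] dx[of t]
      by (auto simp: field_def)
    show ?thesis unfolding e_def[abs_def] e'_def
      by (rule DERIV_cong, rule DERIV_add[OF DERIV_power[OF DERIV_diff[OF y1 x1]] DERIV_power[OF DERIV_diff[OF y2 x2]]])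
         (simp add: divide_inverse; algebra)
  qed
  have e'le: "e' t \<le> K * e t" if t: "t \<in> {0..t1}" for t
  proof -
    define d1 where "d1 = fst (y t) - fst (x t)"
    define d2 where "d2 = snd (y t) - snd (x t)"
    have "e' t = 2 * d2 * ((fst (y t)^(n+1) - fst (x t)^(n+1)) / (real n + 1))"
      unfolding e'_def d1_def d2_def divide_inverse by algebra
    also have "\<dots> \<le> 2 * \<bar>d2\<bar> * (real (n+1) * M^n * \<bar>d1\<bar> / (real n + 1))"
    proof -
      have b: "\<bar>fst (y t)^(n+1) - fst (x t)^(n+1)\<bar> \<le> real (n+1) * M^n * \<bar>d1\<bar>"
        using pow_diff_bound[OF My[OF t] Mx[OF t], of "n+1"] by (simp add: d1_def)
      have "2 * d2 * ((fst (y t)^(n+1) - fst (x t)^(n+1)) / (real n + 1))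
          \<le> \<bar>2 * d2 * ((fst (y t)^(n+1) - fst (x t)^(n+1)) / (real n + 1))\<bar>" by (rule abs_ge_self)
      also have "\<dots> = 2 * \<bar>d2\<bar> * (\<bar>fst (y t)^(n+1) - fst (x t)^(n+1)\<bar> / (real n + 1))"
        by (simp add: abs_mult)
      also have "\<dots> \<le> 2 * \<bar>d2\<bar> * (real (n+1) * M^n * \<bar>d1\<bar> / (real n + 1))"
        using b by (intro mult_left_mono divide_right_mono) auto
      finally show ?thesis .
    qed
    also have "\<dots> = K * (2 * \<bar>d1\<bar> * \<bar>d2\<bar>)" by (simp add: K_def field_simps)
    also have "\<dots> \<le> K * e t"
    proof -
      have "2 * \<bar>d1\<bar> * \<bar>d2\<bar> \<le> d1^2 + d2^2"
        using sum_squares_bound[of "\<bar>d1\<bar>" "\<bar>d2\<bar>"] by (simp add: power2_abs)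
      moreover have "K \<ge> 0" unfolding K_def using My[of 0] t by (auto intro!: divide_nonneg_pos zero_le_power)
      ultimately show ?thesis unfolding e_def d1_def d2_def by (intro mult_left_mono) auto
    qed
    finally show ?thesis .
  qed
  define g where "g t = e t * exp (- K * t)" for t
  have "g t1 \<le> g 0"
  proof (rule DERIV_nonpos_imp_nonincreasing[OF t1])
    fix t assume "0 \<le> t" "t \<le> t1"
    have "(g has_real_derivative e' t * exp (- K * t) + e t * (exp (- K * t) * (- K))) (at t)"
      unfolding g_def[abs_def]
      by (rule DERIV_cong, rule DERIV_mult'[OF de], auto intro!: derivative_eq_intros simp: algebra_simps)
    moreover have "e' t * exp (- K * t) + e t * (exp (- K * t) * (- K)) \<le> 0"
    proof -
      have "e' t * exp (- K * t) + e t * (exp (- K * t) * (- K)) = (e' t - K * e t) * exp (- K * t)"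
        by (simp add: algebra_simps)
      also have "\<dots> \<le> 0" using e'le[of t] \<open>0 \<le> t\<close> \<open>t \<le> t1\<close> by (intro mult_nonpos_nonneg) auto
      finally show ?thesis .
    qed
    ultimately show "\<exists>d. (g has_real_derivative d) (at t) \<and> d \<le> 0" by blast
  qed
  moreover have "g 0 = 0" using e0 by (simp add: g_def e_def)
  moreover have "g t1 \<ge> 0" by (simp add: g_def e_def)
  ultimately have "g t1 = 0" by simp
  hence "e t1 = 0" by (simp add: g_def)
  hence "fst (y t1) = fst (x t1)" "snd (y t1) = snd (x t1)"
    unfolding e_def by (simp_all add: sum_power2_eq_zero_iff)
  thus ?thesis by (simp add: prod_eq_iff)
qed



definition tau :: "nat \<Rightarrow> real \<Rightarrow> real \<Rightarrow> real" where
  "tau n h s = integral {0..s} (pp n (sqrt (2*h))) - integral {s..0} (pp n (sqrt (2*h)))"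
definition Theta :: "nat \<Rightarrow> real \<Rightarrow> real \<Rightarrow> real" where
  "Theta n h t = (THE s. tau n h s = t)"
definition xorb :: "nat \<Rightarrow> real \<Rightarrow> real \<Rightarrow> real \<times> real" where
  "xorb n h t = (uu n (sqrt (2*h)) (Theta n h t), sqrt (2*h) * cos (Theta n h t))"
definition Torb :: "nat \<Rightarrow> real \<Rightarrow> real" where
  "Torb n h = tau n h (2*pi)"

context
  fixes n :: nat and h :: real
  assumes n: "n \<ge> 1" and h: "0 < h" "h < d_n n"
begin

definition "rr = sqrt (2*h)"

lemma rr: "0 < rr" "rr < R0 n" "0 \<le> rr" using R0_sqrt[OF n h] by (auto simp: rr_def)

lemmas cx = n rr(3) rr(2)

abbreviation "p \<equiv> pp n rr"

lemma p_cont: "continuous_on S p" using cont_pp[OF cx] .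

lemma p_pos: "p t > 0" using pp_pos[OF cx] .

lemma p_lb: obtains m where "m > 0" "\<And>t. p t \<ge> m"
proof -
  have sub: "{-rr..rr} \<subseteq> {- R0 n<..<R0 n}" using rr by auto
  obtain w0 where w0: "w0 \<in> {-rr..rr}" "\<And>w. w \<in> {-rr..rr} \<Longrightarrow> dpsi n w0 \<le> dpsi n w"
    using continuous_attains_inf[of "{-rr..rr}" "dpsi n"] continuous_on_subset[OF dpsi_cont[OF n] sub] rr
    by fastforce
  have "dpsi n w0 \<le> p t" for t
  proof -
    have "\<bar>rr * sin t\<bar> \<le> rr" using rr by (simp add: abs_mult mult_left_le)
    thus ?thesis using w0(2)[of "rr * sin t"] by (simp add: pp_def abs_le_iff)
  qed
  moreover have "dpsi n w0 > 0" using dpsi_pos[OF n] w0(1) rr by auto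
  ultimately show ?thesis using that by blast
qed

lemma int_p: "p integrable_on {a..b}" by (rule integrable_continuous_interval[OF p_cont])

lemma tau_eq: "tau n h s = integral {0..s} p - integral {s..0} p" by (simp add: tau_def rr_def)

lemma tau_alt: assumes "a \<le> s" "a \<le> 0" shows "tau n h s = integral {a..s} p - integral {a..0} p"
proof (cases "s \<ge> 0")
  case True
  have "integral {a..0} p + integral {0..s} p = integral {a..s} p"
    using Henstock_Kurzweil_Integration.integral_combine[where a=a and c=0 and b=s and f=p] True assms int_p by simp
  moreover have "integral {s..0} p = 0"
  proof (cases "s = 0")
    case True thus ?thesis by simp
  next
    case False thus ?thesis using \<open>s \<ge> 0\<close> by simp
  qed
  ultimately show ?thesis unfolding tau_eq by simp
next
  case False
  have "integral {a..s} p + integral {s..0} p = integral {a..0} p"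
    using Henstock_Kurzweil_Integration.integral_combine[where a=a and c=s and b=0 and f=p] False assms int_p by simp
  moreover have "integral {0..s} p = 0" using False by simp
  ultimately show ?thesis unfolding tau_eq by simp
qed

lemma tau_deriv: "(tau n h has_real_derivative p s) (at s)"
proof -
  define a where "a = - \<bar>s\<bar> - 1"
  define b where "b = \<bar>s\<bar> + 1"
  have ab: "a < s" "s < b" "a \<le> 0" by (auto simp: a_def b_def)
  have "((\<lambda>x. integral {a..x} p) has_real_derivative p s) (at s within {a..b})"
    by (rule integral_has_real_derivative[OF p_cont]) (use ab in auto)
  hence "((\<lambda>x. integral {a..x} p) has_real_derivative p s) (at s)"
    using at_within_Icc_at[OF ab(1) ab(2)] by simp
  hence "((\<lambda>x. integral {a..x} p - integral {a..0} p) has_real_derivative p s - 0) (at s)"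
    by (intro DERIV_diff DERIV_const)
  hence "((\<lambda>x. integral {a..x} p - integral {a..0} p) has_real_derivative p s) (at s)" by simp
  thus ?thesis
  proof (rule has_field_derivative_transform_within_open[where S="{a<..<b}"])
    fix x assume "x \<in> {a<..<b}"
    hence "a \<le> x" by simp
    thus "integral {a..x} p - integral {a..0} p = tau n h x" using tau_alt[of a x] ab by simp
  qed (use ab in auto)
qed

lemma tau_isCont: "isCont (tau n h) s" using tau_deriv by (rule DERIV_isCont)

lemma tau_cont: "continuous_on S (tau n h)" by (intro continuous_at_imp_continuous_on ballI tau_isCont)

lemma tau_mono: "s1 < s2 \<Longrightarrow> tau n h s1 < tau n h s2"
  by (rule DERIV_pos_imp_increasing) (use tau_deriv p_pos in blast)+

lemma tau_mono_iff: "tau n h s1 \<le> tau n h s2 \<longleftrightarrow> s1 \<le> s2"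
proof
  assume "tau n h s1 \<le> tau n h s2"
  thus "s1 \<le> s2" using tau_mono[of s2 s1] by (meson linorder_not_le)
next
  assume "s1 \<le> s2"
  thus "tau n h s1 \<le> tau n h s2" using tau_mono[of s1 s2] by (cases "s1 = s2") auto
qed

lemma tau_inj: "tau n h s1 = tau n h s2 \<Longrightarrow> s1 = s2"
  using tau_mono_iff by (metis order_antisym order_refl)

lemma tau_0: "tau n h 0 = 0" by (simp add: tau_eq)

lemma tau_surj: "\<exists>s. tau n h s = t"
proof -
  obtain m where m: "m > 0" "\<And>t. p t \<ge> m" using p_lb by blast
  have lb: "m * s \<le> tau n h s" if "0 \<le> s" for s
  proof -
    have "integral {0..s} (\<lambda>x. m) \<le> integral {0..s} p"
      by (rule integral_le) (use m int_p in auto)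
    moreover have "integral {s..0} p = 0"
      using that by (cases "s = 0") auto
    ultimately show ?thesis using that by (simp add: tau_eq content_real mult.commute)
  qed
  have ub: "tau n h s \<le> m * s" if "s \<le> 0" for s
  proof -
    have "integral {s..0} (\<lambda>x. m) \<le> integral {s..0} p"
      by (rule integral_le) (use m int_p in auto)
    moreover have "integral {0..s} p = 0"
      using that by (cases "s = 0") auto
    ultimately show ?thesis using that by (simp add: tau_eq content_real algebra_simps)
  qed
  define s1 where "s1 = - \<bar>t\<bar> / m"
  define s2 where "s2 = \<bar>t\<bar> / m"
  have "tau n h s1 \<le> t"
  proof -
    have "s1 \<le> 0" using m by (simp add: s1_def)
    hence "tau n h s1 \<le> m * s1" by (rule ub)
    also have "\<dots> = - \<bar>t\<bar>" using m by (simp add: s1_def)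
    finally show ?thesis by simp
  qed
  moreover have "t \<le> tau n h s2"
  proof -
    have "0 \<le> s2" using m by (simp add: s2_def)
    hence "m * s2 \<le> tau n h s2" by (rule lb)
    moreover have "m * s2 = \<bar>t\<bar>" using m by (simp add: s2_def)
    ultimately show ?thesis by simp
  qed
  moreover have "s1 \<le> s2" using m by (simp add: s1_def s2_def divide_nonpos_pos order_trans[of _ 0])
  ultimately obtain s where "s1 \<le> s" "s \<le> s2" "tau n h s = t"
    using IVT'[of "tau n h" s1 t s2] tau_cont by blast
  thus ?thesis by blast
qed

lemma tau_Theta: "tau n h (Theta n h t) = t"
  unfolding Theta_def by (rule theI') (use tau_surj tau_inj in blast)

lemma Theta_tau: "Theta n h (tau n h s) = s"
  using tau_Theta tau_inj by blast

lemma Theta_mono_iff: "Theta n h t1 \<le> Theta n h t2 \<longleftrightarrow> t1 \<le> t2"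
  by (metis tau_Theta tau_mono_iff)

lemma Theta_strict: "t1 < t2 \<Longrightarrow> Theta n h t1 < Theta n h t2"
  using Theta_mono_iff[of t1 t2] Theta_mono_iff[of t2 t1] by auto

lemma Theta_0: "Theta n h 0 = 0" using Theta_tau[of 0] tau_0 by simp

lemma Theta_isCont: "isCont (Theta n h) t"
proof (rule isCont_inv_interval[where f="tau n h" and a="Theta n h (t-1)" and b="Theta n h (t+1)" and c="t-1" and d="t+1"])
  show "continuous_on {Theta n h (t - 1)..Theta n h (t + 1)} (tau n h)" by (rule tau_cont)
  show "Theta n h (tau n h x) = x" for x by (rule Theta_tau)
  show "Theta n h y \<in> {Theta n h (t - 1)..Theta n h (t + 1)} \<and> tau n h (Theta n h y) = y" if "y \<in> {t - 1..t + 1}" for y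
    using that by (simp add: Theta_mono_iff tau_Theta)
qed auto

lemma Theta_deriv: "(Theta n h has_real_derivative inverse (p (Theta n h t))) (at t)"
  by (rule DERIV_inverse_function[where f="tau n h" and a="t-1" and b="t+1"])
     (use tau_deriv p_pos tau_Theta Theta_isCont in \<open>auto simp: less_imp_neq[symmetric]\<close>)

lemma xorb_eq: "xorb n h t = (uu n rr (Theta n h t), rr * cos (Theta n h t))"
  by (simp add: xorb_def rr_def)

lemma xorb_deriv: "(xorb n h has_vector_derivative field n (xorb n h t)) (at t)"
proof -
  define th where "th = Theta n h t"
  have d1: "((\<lambda>t. uu n rr (Theta n h t)) has_real_derivative pp n rr th * (rr * cos th) * inverse (p th)) (at t)"
    using DERIV_chain2[OF uu_deriv[OF cx] Theta_deriv] by (simp add: th_def)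
  have dc: "((\<lambda>x. rr * cos x) has_real_derivative rr * (- sin th)) (at th)"
    by (auto intro!: derivative_eq_intros)
  have d2: "((\<lambda>t. rr * cos (Theta n h t)) has_real_derivative (rr * (- sin th)) * inverse (p th)) (at t)"
    using DERIV_chain2[OF dc[unfolded th_def] Theta_deriv] by (simp add: th_def)
  have e1: "pp n rr th * (rr * cos th) * inverse (p th) = rr * cos th" using p_pos[of th] by simp
  have e2: "(rr * (- sin th)) * inverse (p th) = - uu n rr th + uu n rr th ^ (n+1) / (real n + 1)"
  proof -
    have "rr * sin th = Wd n (uu n rr th) * p th" by (rule F1[OF cx])
    hence "(rr * (- sin th)) * inverse (p th) = - Wd n (uu n rr th)" using p_pos[of th] by (simp add: field_simps)
    thus ?thesis by (simp add: Wd_def)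
  qed
  have "((\<lambda>t. (uu n rr (Theta n h t), rr * cos (Theta n h t))) has_vector_derivative
      (rr * cos th, - uu n rr th + uu n rr th ^ (n+1) / (real n + 1))) (at t)"
    using d1 d2 unfolding e1 e2 has_real_derivative_iff_has_vector_derivative
    by (rule has_vector_derivative_Pair)
  moreover have "field n (xorb n h t) = (rr * cos th, - uu n rr th + uu n rr th ^ (n+1) / (real n + 1))"
    by (simp add: field_def xorb_eq th_def)
  moreover have "xorb n h = (\<lambda>t. (uu n rr (Theta n h t), rr * cos (Theta n h t)))"
    by (rule ext) (simp add: xorb_eq)
  ultimately show ?thesis by simp
qed

lemma Torb_pos: "Torb n h > 0" using tau_mono[of 0 "2*pi"] tau_0 by (simp add: Torb_def)

lemma Theta_Torb: "Theta n h (Torb n h) = 2*pi" by (simp add: Torb_def Theta_tau)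

lemma xorb_orbit: "is_orbit n h (xorb n h) (Torb n h)"
  unfolding is_orbit_def
proof (intro conjI allI ballI xorb_deriv Torb_pos)
  show x0: "xorb n h 0 = (0, sqrt (2*h))" using psi_0[OF n] by (simp add: xorb_eq Theta_0 uu_def rr_def)
  show "xorb n h (Torb n h) = xorb n h 0" using psi_0[OF n] by (simp add: xorb_eq Theta_0 Theta_Torb uu_def)
  fix t assume t: "t \<in> {0<..<Torb n h}"
  have th: "0 < Theta n h t" "Theta n h t < 2*pi"
    using t Theta_strict[of 0 t] Theta_strict[of t "Torb n h"] Theta_0 Theta_Torb by auto
  show "xorb n h t \<noteq> xorb n h 0"
  proof
    assume "xorb n h t = xorb n h 0"
    hence "snd (xorb n h t) = snd (xorb n h 0)" by simp
    hence "rr * cos (Theta n h t) = rr * cos (Theta n h 0)" by (simp only: xorb_eq snd_conv)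
    hence "rr * cos (Theta n h t) = rr" by (simp add: Theta_0)
    hence "cos (Theta n h t) = 1" using rr by simp
    then obtain k :: int where k: "Theta n h t = of_int k * 2 * pi" using cos_one_2pi_int by blast
    hence "0 < of_int k * 2 * pi" "of_int k * 2 * pi < 2 * pi" using th by auto
    hence "(0::real) < of_int k" "(of_int k :: real) < 1" by (auto simp: zero_less_mult_iff)
    hence "0 < k" "k < 1" by simp_all
    thus False by linarith
  qed
qed

end



context
  fixes n :: nat and h :: real
  assumes n: "n \<ge> 1" and h: "0 < h" "h < d_n n"
begin

lemma orbit_props:
  obtains y T where "orbit n h = (y, T)" "is_orbit n h y T" "T = Torb n h" "\<And>t. 0 \<le> t \<Longrightarrow> y t = xorb n h t"
proof -
  have ex: "\<exists>q. case q of (x, T) \<Rightarrow> is_orbit n h x T" using xorb_orbit[OF n h] by auto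
  obtain y T where yT: "orbit n h = (y, T)" by (cases "orbit n h") auto
  have orb: "is_orbit n h y T"
    using someI_ex[OF ex] yT unfolding orbit_def by simp
  have xo: "is_orbit n h (xorb n h) (Torb n h)" by (rule xorb_orbit[OF n h])
  have eq: "y t = xorb n h t" if "0 \<le> t" for t
    by (rule ode_unique[where n=n]) (use orb xo that in \<open>auto simp: is_orbit_def\<close>)
  have "T = Torb n h"
  proof (rule ccontr)
    assume ne: "T \<noteq> Torb n h"
    show False
    proof (cases "T < Torb n h")
      case True
      have "T \<in> {0<..<Torb n h}" using True orb by (auto simp: is_orbit_def)
      hence "xorb n h T \<noteq> xorb n h 0" using xo by (auto simp: is_orbit_def)
      moreover have "y T = y 0" using orb by (auto simp: is_orbit_def)
      moreover have "T \<ge> 0" using orb by (auto simp: is_orbit_def)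
      ultimately show False using eq[of T] eq[of 0] by simp
    next
      case False
      hence "Torb n h \<in> {0<..<T}" using ne xo by (auto simp: is_orbit_def)
      hence "y (Torb n h) \<noteq> y 0" using orb by (auto simp: is_orbit_def)
      moreover have "xorb n h (Torb n h) = xorb n h 0" using xo by (auto simp: is_orbit_def)
      moreover have "Torb n h \<ge> 0" using xo by (auto simp: is_orbit_def)
      ultimately show False using eq[of "Torb n h"] eq[of 0] by simp
    qed
  qed
  thus ?thesis using that yT orb eq by blast
qed

lemma xorb_cont: "continuous_on S (xorb n h)"
  by (intro continuous_at_imp_continuous_on ballI has_vector_derivative_continuous[OF xorb_deriv[OF n h]])

lemma oint_k: "oint_du n h (\<lambda>u v. u^k * v) = II n k (sqrt (2*h))"
proof -
  obtain y T where yT: "orbit n h = (y, T)" "is_orbit n h y T" "T = Torb n h" "\<And>t. 0 \<le> t \<Longrightarrow> y t = xorb n h t"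
    using orbit_props by blast
  define G where "G t = fst (xorb n h t) ^ k * snd (xorb n h t) * snd (xorb n h t)" for t
  have "oint_du n h (\<lambda>u v. u^k * v) = integral {0..T} (\<lambda>t. fst (y t) ^ k * snd (y t) * deriv (\<lambda>s. fst (y s)) t)"
    by (simp add: oint_du_def yT(1))
  also have "\<dots> = integral {0..Torb n h} G"
    unfolding yT(3)
  proof (rule integral_cong)
    fix t assume t: "t \<in> {0..Torb n h}"
    have "((\<lambda>s. fst (y s)) has_real_derivative snd (y t)) (at t)"
      using yT(2) vd_fst[of y "snd (y t)" "- fst (y t) + fst (y t)^(n+1) / (real n + 1)" t]
      by (auto simp: is_orbit_def field_def)
    hence "deriv (\<lambda>s. fst (y s)) t = snd (y t)" by (rule DERIV_imp_deriv)
    thus "fst (y t) ^ k * snd (y t) * deriv (\<lambda>s. fst (y s)) t = G t"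
      using yT(4)[of t] t by (simp add: G_def)
  qed
  also have "\<dots> = II n k (sqrt (2*h))"
  proof -
    have sub: "((\<lambda>s. pp n (sqrt (2*h)) s *\<^sub>R G (tau n h s)) has_integral integral {tau n h 0..tau n h (2*pi)} G) {0..2*pi}"
    proof (rule has_integral_substitution[where c=0 and d="Torb n h"])
      show "tau n h 0 \<le> tau n h (2*pi)" using tau_mono_iff[OF n h] by simp
      show "tau n h ` {0..2*pi} \<subseteq> {0..Torb n h}"
      proof
        fix z assume "z \<in> tau n h ` {0..2*pi}"
        then obtain x where x: "x \<in> {0..2*pi}" "z = tau n h x" by blast
        have "tau n h 0 \<le> tau n h x" "tau n h x \<le> tau n h (2*pi)"
          using x tau_mono_iff[OF n h, of 0 x] tau_mono_iff[OF n h, of x "2*pi"] by auto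
        thus "z \<in> {0..Torb n h}" using x tau_0[OF n h] by (simp add: Torb_def)
      qed
      show "continuous_on {0..Torb n h} G" unfolding G_def
        by (intro continuous_intros continuous_on_compose2[OF xorb_cont, of _ _ UNIV]) auto
      show "(tau n h has_real_derivative pp n (sqrt (2*h)) x) (at x within {0..2*pi})" for x
        using tau_deriv[OF n h, of x] by (simp add: has_field_derivative_at_within rr_def[OF n h])
    qed simp
    have "integral {0..Torb n h} G = integral {0..2*pi} (\<lambda>s. pp n (sqrt (2*h)) s *\<^sub>R G (tau n h s))"
      using sub tau_0[OF n h] by (simp add: Torb_def integral_unique)
    also have "\<dots> = II n k (sqrt (2*h))"
      unfolding II_def
      by (rule integral_cong)
         (simp add: G_def xorb_eq[OF n h] Theta_tau[OF n h] rr_def[OF n h] power2_eq_square)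
    finally show ?thesis .
  qed
  finally show ?thesis .
qed

lemma B_eq: "B n h = II n n (sqrt (2*h))"
  unfolding B_def by (rule oint_k)

lemma B0_eq: "B0 n h = II n 0 (sqrt (2*h))"
proof -
  have "(\<lambda>u v. v) = (\<lambda>(u::real) (v::real). u^0 * v)" by simp
  thus ?thesis unfolding B0_def using oint_k[of 0] by simp
qed

end



lemma In_bound:
  assumes n: "n \<ge> 1" and r: "0 \<le> r" "r < R0 n" and M: "\<And>t. \<bar>uu n r t\<bar> \<le> M"
  shows "\<bar>II n n r\<bar> \<le> M^n * II n 0 r"
proof -
  note ctx = n r
  have c: "continuous_on {0..2*pi} (\<lambda>t. uu n r t ^ k * (r * cos t)^2 * pp n r t)" for k
    by (intro continuous_on_mult continuous_on_power continuous_intros cont_uu[OF ctx] cont_pp[OF ctx])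
  have i: "(\<lambda>t. uu n r t ^ k * (r * cos t)^2 * pp n r t) integrable_on {0..2*pi}" for k
    by (rule integrable_continuous_interval[OF c])
  have pw: "\<bar>uu n r t ^ n\<bar> \<le> M^n" for t
    using power_mono[OF M[of t] abs_ge_zero[of "uu n r t"], of n] by (simp add: power_abs)
  have nn: "0 \<le> (r * cos t)^2 * pp n r t" for t using pp_pos[OF ctx, of t] by simp
  have "II n n r \<le> integral {0..2*pi} (\<lambda>t. M^n * (uu n r t ^ 0 * (r * cos t)^2 * pp n r t))"
    unfolding II_def
  proof (rule integral_le[OF i])
    show "(\<lambda>t. M^n * (uu n r t ^ 0 * (r * cos t)^2 * pp n r t)) integrable_on {0..2*pi}"
      by (rule integrable_on_mult_right[OF i])
    fix t
    have "uu n r t ^ n * ((r * cos t)^2 * pp n r t) \<le> M^n * ((r * cos t)^2 * pp n r t)"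
      using pw[of t] nn[of t] by (intro mult_right_mono) auto
    thus "uu n r t ^ n * (r * cos t)^2 * pp n r t \<le> M^n * (uu n r t ^ 0 * (r * cos t)^2 * pp n r t)"
      by (simp add: mult.assoc)
  qed
  moreover have "- II n n r \<le> integral {0..2*pi} (\<lambda>t. M^n * (uu n r t ^ 0 * (r * cos t)^2 * pp n r t))"
  proof -
    have "integral {0..2*pi} (\<lambda>t. - (uu n r t ^ n * (r * cos t)^2 * pp n r t))
        \<le> integral {0..2*pi} (\<lambda>t. M^n * (uu n r t ^ 0 * (r * cos t)^2 * pp n r t))"
    proof (rule integral_le)
      show "(\<lambda>t. - (uu n r t ^ n * (r * cos t)^2 * pp n r t)) integrable_on {0..2*pi}"
        by (rule integrable_neg[OF i])
      show "(\<lambda>t. M^n * (uu n r t ^ 0 * (r * cos t)^2 * pp n r t)) integrable_on {0..2*pi}"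
        by (rule integrable_on_mult_right[OF i])
      fix t
      have "(- (uu n r t ^ n)) * ((r * cos t)^2 * pp n r t) \<le> M^n * ((r * cos t)^2 * pp n r t)"
        using pw[of t] nn[of t] by (intro mult_right_mono) auto
      thus "- (uu n r t ^ n * (r * cos t)^2 * pp n r t) \<le> M^n * (uu n r t ^ 0 * (r * cos t)^2 * pp n r t)"
        by (simp add: mult.assoc)
    qed
    thus ?thesis unfolding II_def by simp
  qed
  moreover have "integral {0..2*pi} (\<lambda>t. M^n * (uu n r t ^ 0 * (r * cos t)^2 * pp n r t)) = M^n * II n 0 r"
    unfolding II_def by simp
  ultimately show ?thesis by linarith
qed

lemma Btilde_eq:
  assumes n: "n \<ge> 1" and h: "0 < h" "h < d_n n"
  shows "Btilde n h = II n n (sqrt (2*h)) / II n 0 (sqrt (2*h))"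
  by (simp add: Btilde_def B_eq[OF n h] B0_eq[OF n h])

lemma deriv_pos:
  assumes n: "n \<ge> 1" and h: "0 < h" "h < d_n n"
  shows "\<exists>D. (Btilde n has_real_derivative D) (at h) \<and> D > 0"
proof -
  define r where "r = sqrt (2*h)"
  have r: "0 < r" "r < R0 n" using R0_sqrt[OF n h] by (auto simp: r_def)
  have r': "0 \<le> r" using r by simp
  define In where "In = II n n r"
  define I0 where "I0 = II n 0 r"
  define Jn where "Jn = JJ n n r"
  define J0 where "J0 = JJ n 0 r"
  define P where "P = JJ n (n+2) r"
  define c where "c = real n / (real n + 2) / 2"
  have hr: "r^2/2 = h" using h by (simp add: r_def)
  have x1: "h * Jn = (1 + c) * In + c * P"
  proof -
    have "(3*real n+4)/(real n+2)/2 = 1 + c" by (simp add: c_def field_simps)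
    thus ?thesis using X1[OF n r' r(2)] hr by (simp add: Jn_def In_def P_def c_def)
  qed
  have x0: "h * J0 = I0 + c / (real n + 1) * P"
    using X0[OF n r' r(2)] hr by (simp add: J0_def I0_def P_def c_def)
  have I0p: "I0 > 0" using P1[OF n r] by (simp add: I0_def)
  have Inp: "In > 0" using P3[OF n r] by (simp add: In_def)
  have Pp: "P \<ge> 0" using P4[OF n r] by (simp add: P_def)
  have P2': "I0 - In / (real n + 1) > 0"
  proof -
    have "real (n+1) * I0 - In > 0" using P2[OF n r] by (simp add: I0_def In_def)
    hence "(real n + 1) * I0 - In > 0" by (simp add: add.commute)
    hence "((real n + 1) * I0 - In) / (real n + 1) > 0" by simp
    moreover have "((real n + 1) * I0 - In) / (real n + 1) = I0 - In / (real n + 1)"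
      by (simp add: diff_divide_distrib)
    ultimately show ?thesis by simp
  qed
  have cp: "c > 0" using n by (simp add: c_def)
  have key: "h * (Jn * I0 - In * J0) = c * In * I0 + c * P * (I0 - In / (real n + 1))"
  proof -
    have "h * (Jn * I0 - In * J0) = (h * Jn) * I0 - In * (h * J0)" by (simp add: algebra_simps)
    also have "\<dots> = ((1 + c) * In + c * P) * I0 - In * (I0 + c / (real n + 1) * P)" by (simp only: x1 x0)
    also have "\<dots> = c * In * I0 + c * P * (I0 - In / (real n + 1))" by (simp add: algebra_simps)
    finally show ?thesis .
  qed
  have "c * In * I0 + c * P * (I0 - In / (real n + 1)) > 0"
  proof -
    have "c * In * I0 > 0" using cp Inp I0p by simp
    moreover have "c * P * (I0 - In / (real n + 1)) \<ge> 0" using cp Pp P2' by simp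
    ultimately show ?thesis by linarith
  qed
  hence "h * (Jn * I0 - In * J0) > 0" using key by simp
  hence num: "Jn * I0 - In * J0 > 0" using h(1) by (rule zero_less_mult_pos)
  have dN: "((\<lambda>h. II n n (sqrt (2*h))) has_real_derivative Jn) (at h)"
    using Ih_deriv[OF n h, of n] by (simp add: Jn_def r_def)
  have dD: "((\<lambda>h. II n 0 (sqrt (2*h))) has_real_derivative J0) (at h)"
    using Ih_deriv[OF n h, of 0] by (simp add: J0_def r_def)
  have "((\<lambda>h. II n n (sqrt (2*h)) / II n 0 (sqrt (2*h))) has_real_derivative
      (Jn * II n 0 (sqrt (2*h)) - II n n (sqrt (2*h)) * J0) / (II n 0 (sqrt (2*h)) * II n 0 (sqrt (2*h)))) (at h)"
    by (rule DERIV_divide[OF dN dD]) (use I0p in \<open>simp add: I0_def r_def\<close>)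
  hence d: "((\<lambda>h. II n n (sqrt (2*h)) / II n 0 (sqrt (2*h))) has_real_derivative
      (Jn * I0 - In * J0) / (I0 * I0)) (at h)"
    by (simp add: I0_def In_def r_def)
  have "(Btilde n has_real_derivative (Jn * I0 - In * J0) / (I0 * I0)) (at h)"
    by (rule has_field_derivative_transform_within_open[OF d, where S="{0<..<d_n n}"])
       (use h Btilde_eq[OF n] in auto)
  moreover have "(Jn * I0 - In * J0) / (I0 * I0) > 0" using num I0p by simp
  ultimately show ?thesis by blast
qed

theorem proposition1:
  fixes n :: nat
  assumes "n \<ge> 1"
  shows "strict_mono_on {0<..<d_n n} (Btilde n) \<and>
         (\<forall>h\<in>{0<..<d_n n}. \<exists>D. (Btilde n has_real_derivative D) (at h) \<and> D > 0) \<and>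
         (Btilde n \<longlongrightarrow> 0) (at_right 0)"
proof (intro conjI ballI)
  note n = assms
  show dpos: "\<exists>D. (Btilde n has_real_derivative D) (at h) \<and> D > 0" if "h \<in> {0<..<d_n n}" for h
    using deriv_pos[OF n] that by auto
  show "strict_mono_on {0<..<d_n n} (Btilde n)"
  proof (rule strict_mono_onI)
    fix a b assume ab: "a \<in> {0<..<d_n n}" "b \<in> {0<..<d_n n}" "a < b"
    show "Btilde n a < Btilde n b"
    proof (rule DERIV_pos_imp_increasing[OF ab(3)])
      fix x assume "a \<le> x" "x \<le> b"
      hence "x \<in> {0<..<d_n n}" using ab by auto
      thus "\<exists>y. (Btilde n has_real_derivative y) (at x) \<and> 0 < y" using dpos by blast
    qed
  qed
  show "(Btilde n \<longlongrightarrow> 0) (at_right 0)"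
  proof (rule tendstoI)
    fix e :: real assume e: "e > 0"
    define e' where "e' = min (e/2) 1"
    have e': "0 < e'" "e' \<le> 1" "e' < e" using e by (auto simp: e'_def)
    have "isCont (psi n) 0" using psi_isCont[OF n, of 0] R0_pos[OF n] by simp
    hence "\<exists>s>0. \<forall>x. x \<noteq> 0 \<and> norm (x - 0) < s \<longrightarrow> norm (psi n x - psi n 0) < e'"
      using e'(1) unfolding isCont_def LIM_eq by blast
    then obtain dl where dl0: "dl > 0" and dl1: "\<And>x. x \<noteq> 0 \<Longrightarrow> \<bar>x\<bar> < dl \<Longrightarrow> \<bar>psi n x\<bar> < e'"
      using psi_0[OF n] by auto
    have dl2: "\<bar>psi n w\<bar> < e'" if "\<bar>w\<bar> < dl" for w
      using that dl1[of w] psi_0[OF n] e'(1) by (cases "w = 0") auto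
    note dl = dl0 dl2
    have dpos': "d_n n > 0" using n by (simp add: d_n_def)
    define b where "b = min (d_n n) (dl^2 / 2)"
    have b: "b > 0" using dl dpos' by (simp add: b_def)
    show "eventually (\<lambda>h. dist (Btilde n h) 0 < e) (at_right 0)"
      unfolding eventually_at_right_field
    proof (intro exI[of _ b] conjI allI impI)
      show "(0::real) < b" by (rule b)
      fix h :: real assume h: "0 < h" "h < b"
      hence hd: "h < d_n n" by (simp add: b_def)
      define r where "r = sqrt (2*h)"
      have r: "0 < r" "r < R0 n" using R0_sqrt[OF n h(1) hd] by (auto simp: r_def)
      have rdl: "r < dl"
      proof -
        have "2*h < dl^2" using h by (simp add: b_def)
        hence "sqrt (2*h) < sqrt (dl^2)" by (rule real_sqrt_less_mono)
        thus ?thesis using dl by (simp add: r_def)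
      qed
      have M: "\<bar>uu n r t\<bar> \<le> e'" for t
      proof -
        have "\<bar>r * sin t\<bar> \<le> r" using r by (simp add: abs_mult mult_left_le)
        hence "\<bar>r * sin t\<bar> < dl" using rdl by simp
        thus ?thesis using dl(2) by (simp add: uu_def less_imp_le)
      qed
      have bd: "\<bar>II n n r\<bar> \<le> e'^n * II n 0 r" using In_bound[OF n _ r(2) M] r by simp
      have I0p: "II n 0 r > 0" using P1[OF n r] .
      have "\<bar>Btilde n h\<bar> = \<bar>II n n r\<bar> / II n 0 r" using Btilde_eq[OF n h(1) hd] I0p by (simp add: r_def)
      also have "\<dots> \<le> e'^n" using bd I0p by (simp add: divide_le_eq)
      also have "\<dots> \<le> e'" using power_decreasing[of 1 n e'] n e' by simp
      also have "\<dots> < e" by (rule e'(3))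
      finally show "dist (Btilde n h) 0 < e" by simp
    qed
  qed
qed


end
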